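(* Let $\Gamma$ be a totally ordered group, let $\mathcal{G}$ be a $\Gamma$-graded ample Hausdorff groupoid with continuous cocycle $c:\mathcal{G}\to\Gamma$, and let $R$ be a field. If the Steinberg algebra $A_R(\mathcal{G})$ is a left SF-ring, then the unit space $\mathcal{G}^{(0)}$ is $\Gamma$-aperiodic, i.e. for every $u\in\mathcal{G}^{(0)}$ one has $c(x)=\varepsilon$ for all $x\in\mathcal{G}_u^u$.
   Context: A topological groupoid $\mathcal{G}$ has domain and range maps $d(x)=x^{-1}x$, $r(x)=xx^{-1}$ and unit space $\mathcal{G}^{(0)}=d(\mathcal{G})$. It is étale if $d$ is a local homeomorphism; an open bisection is an open $U\subseteq\mathcal{G}$ with $d|_U,r|_U$ homeomorphisms onto open subsets of $\mathcal{G}^{(0)}$; $\mathcal{G}$ is ample if it is étale with a basis of compact open bisections. For a discrete group $\Gamma$ with identity $\varepsilon$, a $\Gamma$-grading of $\mathcal{G}$ is a continuous map $c:\mathcal{G}\to\Gamma$ with $c(gh)=c(g)c(h)$ for composable $g,h$. The isotropy group at $u$ is $\mathcal{G}_u^u=\{\gamma: d(\gamma)=r(\gamma)=u\}$; $u$ is $\Gamma$-aperiodic if $\mathcal{G}_u^u\subseteq c^{-1}(\varepsilon)$. The Steinberg algebra $A_R(\mathcal{G})$ is the $R$-algebra of compactly supported locally constant functions $\mathcal{G}\to R$ with pointwise addition and convolution $(f*g)(\gamma)=\sum_{\gamma=\alpha\beta}f(\alpha)g(\beta)$; it is a ring with local units. For a ring $A$ with local units, $A$ is a left SF-ring if every simple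 unital left $A$-module $N$ (unital meaning $AN=N$) is flat, i.e. $-\otimes_A N$ is exact on the category of unital right $A$-modules. *)

theory Defs
  imports "HOL-Analysis.Analysis"
begin

text \<open>A (possibly non-abelian) group written additively (class group_add, identity 0),
  equipped with a total order invariant under left and right translation.\<close>
definition totally_ordered_group :: "'c::{group_add,linorder} itself \<Rightarrow> bool" where
  "totally_ordered_group _ \<equiv>
     (\<forall>a b x :: 'c. a \<le> b \<longrightarrow> x + a \<le> x + b \<and> a + x \<le> b + x)"

text \<open>A groupoid with arrow set topspace T, composable pairs G2, multiplication gmul
  and inverse ginv (Renault's axioms).\<close>
definition groupoid :: "'g topology \<Rightarrow> ('g \<times> 'g) set \<Rightarrow> ('g \<Rightarrow> 'g \<Rightarrow> 'g) \<Rightarrow> ('g \<Rightarrow> 'g) \<Rightarrow> bool" where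
  "groupoid T G2 gmul ginv \<equiv>
     G2 \<subseteq> topspace T \<times> topspace T \<and>
     (\<forall>x\<in>topspace T. ginv x \<in> topspace T \<and> ginv (ginv x) = x) \<and>
     (\<forall>(x,y)\<in>G2. gmul x y \<in> topspace T) \<and>
     (\<forall>x y z. (x,y) \<in> G2 \<and> (y,z) \<in> G2 \<longrightarrow>
        (gmul x y, z) \<in> G2 \<and> (x, gmul y z) \<in> G2 \<and> gmul (gmul x y) z = gmul x (gmul y z)) \<and>
     (\<forall>x\<in>topspace T. (ginv x, x) \<in> G2) \<and>
     (\<forall>(x,y)\<in>G2. gmul (ginv x) (gmul x y) = y \<and> gmul (gmul x y) (ginv y) = x)"

definition gdom :: "('g \<Rightarrow> 'g \<Rightarrow> 'g) \<Rightarrow> ('g \<Rightarrow> 'g) \<Rightarrow> 'g \<Rightarrow> 'g" where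
  "gdom gmul ginv x = gmul (ginv x) x"

definition gran :: "('g \<Rightarrow> 'g \<Rightarrow> 'g) \<Rightarrow> ('g \<Rightarrow> 'g) \<Rightarrow> 'g \<Rightarrow> 'g" where
  "gran gmul ginv x = gmul x (ginv x)"

definition unit_space :: "'g topology \<Rightarrow> ('g \<Rightarrow> 'g \<Rightarrow> 'g) \<Rightarrow> ('g \<Rightarrow> 'g) \<Rightarrow> 'g set" where
  "unit_space T gmul ginv = gdom gmul ginv ` topspace T"

definition isotropy :: "'g topology \<Rightarrow> ('g \<Rightarrow> 'g \<Rightarrow> 'g) \<Rightarrow> ('g \<Rightarrow> 'g) \<Rightarrow> 'g \<Rightarrow> 'g set" where
  "isotropy T gmul ginv u = {x \<in> topspace T. gdom gmul ginv x = u \<and> gran gmul ginv x = u}"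

definition topological_groupoid :: "'g topology \<Rightarrow> ('g \<times> 'g) set \<Rightarrow> ('g \<Rightarrow> 'g \<Rightarrow> 'g) \<Rightarrow> ('g \<Rightarrow> 'g) \<Rightarrow> bool" where
  "topological_groupoid T G2 gmul ginv \<equiv>
     groupoid T G2 gmul ginv \<and>
     continuous_map (subtopology (prod_topology T T) G2) T (\<lambda>(x,y). gmul x y) \<and>
     continuous_map T T ginv"

definition etale_groupoid :: "'g topology \<Rightarrow> ('g \<times> 'g) set \<Rightarrow> ('g \<Rightarrow> 'g \<Rightarrow> 'g) \<Rightarrow> ('g \<Rightarrow> 'g) \<Rightarrow> bool" where
  "etale_groupoid T G2 gmul ginv \<equiv>
     topological_groupoid T G2 gmul ginv \<and>
     (\<forall>x\<in>topspace T. \<exists>U. openin T U \<and> x \<in> U \<and>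
        openin (subtopology T (unit_space T gmul ginv)) (gdom gmul ginv ` U) \<and>
        homeomorphic_map (subtopology T U) (subtopology T (gdom gmul ginv ` U)) (gdom gmul ginv))"

definition open_bisection :: "'g topology \<Rightarrow> ('g \<Rightarrow> 'g \<Rightarrow> 'g) \<Rightarrow> ('g \<Rightarrow> 'g) \<Rightarrow> 'g set \<Rightarrow> bool" where
  "open_bisection T gmul ginv U \<equiv>
     openin T U \<and>
     openin (subtopology T (unit_space T gmul ginv)) (gdom gmul ginv ` U) \<and>
     homeomorphic_map (subtopology T U) (subtopology T (gdom gmul ginv ` U)) (gdom gmul ginv) \<and>
     openin (subtopology T (unit_space T gmul ginv)) (gran gmul ginv ` U) \<and>
     homeomorphic_map (subtopology T U) (subtopology T (gran gmul ginv ` U)) (gran gmul ginv)"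

definition ample_groupoid :: "'g topology \<Rightarrow> ('g \<times> 'g) set \<Rightarrow> ('g \<Rightarrow> 'g \<Rightarrow> 'g) \<Rightarrow> ('g \<Rightarrow> 'g) \<Rightarrow> bool" where
  "ample_groupoid T G2 gmul ginv \<equiv>
     etale_groupoid T G2 gmul ginv \<and>
     (\<forall>W x. openin T W \<and> x \<in> W \<longrightarrow>
        (\<exists>B. open_bisection T gmul ginv B \<and> compactin T B \<and> x \<in> B \<and> B \<subseteq> W))"

definition grading :: "'g topology \<Rightarrow> ('g \<times> 'g) set \<Rightarrow> ('g \<Rightarrow> 'g \<Rightarrow> 'g) \<Rightarrow> ('g \<Rightarrow> 'c::group_add) \<Rightarrow> bool" where
  "grading T G2 gmul c \<equiv>
     continuous_map T (discrete_topology UNIV) c \<and>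
     (\<forall>(x,y)\<in>G2. c (gmul x y) = c x + c y)"

record 'a rng =
  rcarr :: "'a set"
  radd :: "'a \<Rightarrow> 'a \<Rightarrow> 'a"
  rmul :: "'a \<Rightarrow> 'a \<Rightarrow> 'a"

record 'm abgrp =
  gcarr :: "'m set"
  gadd :: "'m \<Rightarrow> 'm \<Rightarrow> 'm"
  gzero :: 'm

record ('m, 'a) lmodule = "'m abgrp" +
  lact :: "'a \<Rightarrow> 'm \<Rightarrow> 'm"

record ('m, 'a) rmodule = "'m abgrp" +
  ract :: "'m \<Rightarrow> 'a \<Rightarrow> 'm"

definition abgroup :: "('m, 'b) abgrp_scheme \<Rightarrow> bool" where
  "abgroup M \<equiv>
     gzero M \<in> gcarr M \<and>
     (\<forall>x\<in>gcarr M. \<forall>y\<in>gcarr M. gadd M x y \<in> gcarr M) \<and>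
     (\<forall>x\<in>gcarr M. \<forall>y\<in>gcarr M. \<forall>z\<in>gcarr M. gadd M (gadd M x y) z = gadd M x (gadd M y z)) \<and>
     (\<forall>x\<in>gcarr M. \<forall>y\<in>gcarr M. gadd M x y = gadd M y x) \<and>
     (\<forall>x\<in>gcarr M. gadd M (gzero M) x = x) \<and>
     (\<forall>x\<in>gcarr M. \<exists>y\<in>gcarr M. gadd M x y = gzero M)"

definition left_module :: "'a rng \<Rightarrow> ('m, 'a) lmodule \<Rightarrow> bool" where
  "left_module A N \<equiv> abgroup N \<and>
     (\<forall>a\<in>rcarr A. \<forall>n\<in>gcarr N. lact N a n \<in> gcarr N) \<and>
     (\<forall>a\<in>rcarr A. \<forall>b\<in>rcarr A. \<forall>n\<in>gcarr N.
        lact N (radd A a b) n = gadd N (lact N a n) (lact N b n)) \<and>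
     (\<forall>a\<in>rcarr A. \<forall>n\<in>gcarr N. \<forall>n'\<in>gcarr N.
        lact N a (gadd N n n') = gadd N (lact N a n) (lact N a n')) \<and>
     (\<forall>a\<in>rcarr A. \<forall>b\<in>rcarr A. \<forall>n\<in>gcarr N. lact N (rmul A a b) n = lact N a (lact N b n))"

definition right_module :: "'a rng \<Rightarrow> ('m, 'a) rmodule \<Rightarrow> bool" where
  "right_module A M \<equiv> abgroup M \<and>
     (\<forall>a\<in>rcarr A. \<forall>m\<in>gcarr M. ract M m a \<in> gcarr M) \<and>
     (\<forall>a\<in>rcarr A. \<forall>b\<in>rcarr A. \<forall>m\<in>gcarr M.
        ract M m (radd A a b) = gadd M (ract M m a) (ract M m b)) \<and>
     (\<forall>a\<in>rcarr A. \<forall>m\<in>gcarr M. \<forall>m'\<in>gcarr M.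
        ract M (gadd M m m') a = gadd M (ract M m a) (ract M m' a)) \<and>
     (\<forall>a\<in>rcarr A. \<forall>b\<in>rcarr A. \<forall>m\<in>gcarr M. ract M m (rmul A a b) = ract M (ract M m a) b)"

text \<open>Unital: AN = N, i.e. every element is a finite sum of products a n.\<close>
definition unital_left_module :: "'a rng \<Rightarrow> ('m, 'a) lmodule \<Rightarrow> bool" where
  "unital_left_module A N \<equiv> left_module A N \<and>
     (\<forall>n\<in>gcarr N. \<exists>ps. set ps \<subseteq> rcarr A \<times> gcarr N \<and>
        n = foldr (\<lambda>(a, m) acc. gadd N (lact N a m) acc) ps (gzero N))"

definition unital_right_module :: "'a rng \<Rightarrow> ('m, 'a) rmodule \<Rightarrow> bool" where
  "unital_right_module A M \<equiv> right_module A M \<and>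
     (\<forall>m\<in>gcarr M. \<exists>ps. set ps \<subseteq> gcarr M \<times> rcarr A \<and>
        m = foldr (\<lambda>(m', a) acc. gadd M (ract M m' a) acc) ps (gzero M))"

definition left_submodule :: "'a rng \<Rightarrow> ('m, 'a) lmodule \<Rightarrow> 'm set \<Rightarrow> bool" where
  "left_submodule A N S \<equiv> S \<subseteq> gcarr N \<and> gzero N \<in> S \<and>
     (\<forall>x\<in>S. \<forall>y\<in>S. gadd N x y \<in> S) \<and>
     (\<forall>x\<in>S. \<forall>y\<in>gcarr N. gadd N x y = gzero N \<longrightarrow> y \<in> S) \<and>
     (\<forall>a\<in>rcarr A. \<forall>x\<in>S. lact N a x \<in> S)"

definition simple_left_module :: "'a rng \<Rightarrow> ('m, 'a) lmodule \<Rightarrow> bool" where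
  "simple_left_module A N \<equiv> left_module A N \<and> gcarr N \<noteq> {gzero N} \<and>
     (\<forall>S. left_submodule A N S \<longrightarrow> S = {gzero N} \<or> S = gcarr N)"

definition right_hom :: "'a rng \<Rightarrow> ('m, 'a) rmodule \<Rightarrow> ('m, 'a) rmodule \<Rightarrow> ('m \<Rightarrow> 'm) \<Rightarrow> bool" where
  "right_hom A M M' f \<equiv>
     (\<forall>m\<in>gcarr M. f m \<in> gcarr M') \<and>
     (\<forall>m\<in>gcarr M. \<forall>m'\<in>gcarr M. f (gadd M m m') = gadd M' (f m) (f m')) \<and>
     (\<forall>m\<in>gcarr M. \<forall>a\<in>rcarr A. f (ract M m a) = ract M' (f m) a)"

section \<open>Tensor products M \<otimes>_A N, as free abelian group modulo relations\<close>

text \<open>Free abelian group on X: finitely supported integer functions supported in X.\<close>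
definition free_on :: "'x set \<Rightarrow> ('x \<Rightarrow> int) set" where
  "free_on X = {z. finite {x. z x \<noteq> 0} \<and> {x. z x \<noteq> 0} \<subseteq> X}"

definition delta :: "'x \<Rightarrow> 'x \<Rightarrow> int" where
  "delta x = (\<lambda>y. if y = x then 1 else 0)"

inductive_set int_span :: "('x \<Rightarrow> int) set \<Rightarrow> ('x \<Rightarrow> int) set" for S where
  zero: "(\<lambda>_. 0) \<in> int_span S"
| gen: "s \<in> S \<Longrightarrow> s \<in> int_span S"
| diff: "a \<in> int_span S \<Longrightarrow> b \<in> int_span S \<Longrightarrow> (\<lambda>x. a x - b x) \<in> int_span S"

definition tensor_gens :: "'a rng \<Rightarrow> ('m, 'a) rmodule \<Rightarrow> ('n, 'a) lmodule \<Rightarrow> ('m \<times> 'n \<Rightarrow> int) set" where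
  "tensor_gens A M N =
     {(\<lambda>x. delta (gadd M m m', n) x - delta (m, n) x - delta (m', n) x) | m m' n.
        m \<in> gcarr M \<and> m' \<in> gcarr M \<and> n \<in> gcarr N} \<union>
     {(\<lambda>x. delta (m, gadd N n n') x - delta (m, n) x - delta (m, n') x) | m n n'.
        m \<in> gcarr M \<and> n \<in> gcarr N \<and> n' \<in> gcarr N} \<union>
     {(\<lambda>x. delta (ract M m a, n) x - delta (m, lact N a n) x) | m a n.
        m \<in> gcarr M \<and> a \<in> rcarr A \<and> n \<in> gcarr N}"

definition tensor_rels :: "'a rng \<Rightarrow> ('m, 'a) rmodule \<Rightarrow> ('n, 'a) lmodule \<Rightarrow> ('m \<times> 'n \<Rightarrow> int) set" where
  "tensor_rels A M N = int_span (tensor_gens A M N)"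

definition push :: "('x \<Rightarrow> 'y) \<Rightarrow> ('x \<Rightarrow> int) \<Rightarrow> ('y \<Rightarrow> int)" where
  "push F z = (\<lambda>y. \<Sum>x\<in>{x. z x \<noteq> 0 \<and> F x = y}. z x)"

definition tens_map :: "('m \<Rightarrow> 'm) \<Rightarrow> ('m \<times> 'n \<Rightarrow> int) \<Rightarrow> ('m \<times> 'n \<Rightarrow> int)" where
  "tens_map f = push (\<lambda>(m, n). (f m, n))"

text \<open>Elements of Mi\<otimes>N are
  represented by elements of free_on (Mi \<times> N) modulo tensor_rels.\<close>
definition flat_left_module :: "'a rng \<Rightarrow> ('n, 'a) lmodule \<Rightarrow> 'm itself \<Rightarrow> bool" where
  "flat_left_module A N _ \<equiv>
     (\<forall>(M1 :: ('m, 'a) rmodule) M2 M3 f g.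
        unital_right_module A M1 \<and> unital_right_module A M2 \<and> unital_right_module A M3 \<and>
        right_hom A M1 M2 f \<and> right_hom A M2 M3 g \<and>
        inj_on f (gcarr M1) \<and> g ` gcarr M2 = gcarr M3 \<and>
        {m \<in> gcarr M2. g m = gzero M3} = f ` gcarr M1 \<longrightarrow>
          (\<forall>z\<in>free_on (gcarr M1 \<times> gcarr N).
              tens_map f z \<in> tensor_rels A M2 N \<longrightarrow> z \<in> tensor_rels A M1 N) \<and>
          (\<forall>z\<in>free_on (gcarr M1 \<times> gcarr N).
              tens_map g (tens_map f z) \<in> tensor_rels A M3 N) \<and>
          (\<forall>z\<in>free_on (gcarr M2 \<times> gcarr N).
              tens_map g z \<in> tensor_rels A M3 N \<longrightarrow>
              (\<exists>y\<in>free_on (gcarr M1 \<times> gcarr N).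
                 (\<lambda>x. z x - tens_map f y x) \<in> tensor_rels A M2 N)) \<and>
          (\<forall>w\<in>free_on (gcarr M3 \<times> gcarr N). \<exists>z\<in>free_on (gcarr M2 \<times> gcarr N).
              (\<lambda>x. tens_map g z x - w x) \<in> tensor_rels A M3 N))"

text \<open>Since HOL cannot quantify
  over types inside a formula, the carrier types of the simple modules ('n) and of the
  test right modules ('m) are parameters.\<close>
definition left_SF_ring :: "'a rng \<Rightarrow> 'n itself \<Rightarrow> 'm itself \<Rightarrow> bool" where
  "left_SF_ring A tn tm \<equiv>
     (\<forall>N :: ('n, 'a) lmodule. simple_left_module A N \<and> unital_left_module A N \<longrightarrow>
        flat_left_module A N tm)"

definition locally_constant :: "'g topology \<Rightarrow> ('g \<Rightarrow> 'r) \<Rightarrow> bool" where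
  "locally_constant T f \<equiv>
     (\<forall>x\<in>topspace T. \<exists>U. openin T U \<and> x \<in> U \<and> (\<forall>y\<in>U. f y = f x))"

definition steinberg_carrier :: "'g topology \<Rightarrow> ('g \<Rightarrow> 'r::zero) set" where
  "steinberg_carrier T = {f. (\<forall>x. x \<notin> topspace T \<longrightarrow> f x = 0) \<and> locally_constant T f \<and>
      compactin T (T closure_of {x \<in> topspace T. f x \<noteq> 0})}"

text \<open>Convolution; the sum ranges over the (finitely many) factorisations gamma = alpha beta
  with nonzero summand.\<close>
definition convolution :: "'g topology \<Rightarrow> ('g \<times> 'g) set \<Rightarrow> ('g \<Rightarrow> 'g \<Rightarrow> 'g)
    \<Rightarrow> ('g \<Rightarrow> 'r::field) \<Rightarrow> ('g \<Rightarrow> 'r) \<Rightarrow> ('g \<Rightarrow> 'r)" where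
  "convolution T G2 gmul f g = (\<lambda>\<gamma>. if \<gamma> \<in> topspace T then
      (\<Sum>p\<in>{(\<alpha>, \<beta>). (\<alpha>, \<beta>) \<in> G2 \<and> gmul \<alpha> \<beta> = \<gamma> \<and> f \<alpha> \<noteq> 0 \<and> g \<beta> \<noteq> 0}. f (fst p) * g (snd p))
      else 0)"

definition steinberg_algebra :: "'g topology \<Rightarrow> ('g \<times> 'g) set \<Rightarrow> ('g \<Rightarrow> 'g \<Rightarrow> 'g)
    \<Rightarrow> ('g \<Rightarrow> 'r::field) rng" where
  "steinberg_algebra T G2 gmul =
     \<lparr> rcarr = steinberg_carrier T, radd = (\<lambda>f g x. f x + g x),
       rmul = convolution T G2 gmul \<rparr>"

end

theory Submission
  imports Defs
begin


locale gpd =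
  fixes T :: "'g topology" and G2 :: "('g \<times> 'g) set" and gmul :: "'g \<Rightarrow> 'g \<Rightarrow> 'g" and ginv :: "'g \<Rightarrow> 'g"
  assumes gpd: "groupoid T G2 gmul ginv"
begin

abbreviation "G \<equiv> topspace T"
abbreviation "dd \<equiv> gdom gmul ginv"
abbreviation "rr \<equiv> gran gmul ginv"

lemma inv_G: "x \<in> G \<Longrightarrow> ginv x \<in> G" and inv_inv: "x \<in> G \<Longrightarrow> ginv (ginv x) = x"
  using gpd unfolding groupoid_def by auto
lemma comp_G: "(x,y) \<in> G2 \<Longrightarrow> x \<in> G \<and> y \<in> G" using gpd unfolding groupoid_def by auto
lemma mul_G: "(x,y) \<in> G2 \<Longrightarrow> gmul x y \<in> G" using gpd unfolding groupoid_def by auto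
lemma assoc: "(x,y) \<in> G2 \<Longrightarrow> (y,z) \<in> G2 \<Longrightarrow>
        (gmul x y, z) \<in> G2 \<and> (x, gmul y z) \<in> G2 \<and> gmul (gmul x y) z = gmul x (gmul y z)"
  using gpd unfolding groupoid_def by blast
lemma comp_inv: "x \<in> G \<Longrightarrow> (ginv x, x) \<in> G2" using gpd unfolding groupoid_def by auto
lemma canc: "(x,y) \<in> G2 \<Longrightarrow> gmul (ginv x) (gmul x y) = y \<and> gmul (gmul x y) (ginv y) = x"
  using gpd unfolding groupoid_def by auto
lemma comp_inv2: "x \<in> G \<Longrightarrow> (x, ginv x) \<in> G2" using comp_inv[of "ginv x"] inv_G inv_inv by auto

lemma d_G: "x \<in> G \<Longrightarrow> dd x \<in> G" by (simp add: gdom_def comp_inv mul_G)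
lemma r_G: "x \<in> G \<Longrightarrow> rr x \<in> G" by (simp add: gran_def comp_inv2 mul_G)

lemma mul_d: "x \<in> G \<Longrightarrow> (x, dd x) \<in> G2 \<and> gmul x (dd x) = x"
proof -
  assume x: "x \<in> G"
  have 1: "(x, ginv x) \<in> G2" "(ginv x, x) \<in> G2" using x comp_inv comp_inv2 by auto
  from assoc[OF 1] have "(x, gmul (ginv x) x) \<in> G2" and e: "gmul (gmul x (ginv x)) x = gmul x (gmul (ginv x) x)" by auto
  moreover have "gmul (gmul x (ginv x)) (ginv (ginv x)) = x" using canc[OF 1(1)] by auto
  ultimately show ?thesis using x inv_inv by (auto simp: gdom_def)
qed

lemma mul_r: "x \<in> G \<Longrightarrow> (rr x, x) \<in> G2 \<and> gmul (rr x) x = x"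
proof -
  assume x: "x \<in> G"
  have 1: "(x, ginv x) \<in> G2" "(ginv x, x) \<in> G2" using x comp_inv comp_inv2 by auto
  from assoc[OF 1] have "(gmul x (ginv x), x) \<in> G2" and e: "gmul (gmul x (ginv x)) x = gmul x (gmul (ginv x) x)" by auto
  moreover have "gmul (gmul x (ginv x)) (ginv (ginv x)) = x" using canc[OF 1(1)] by auto
  ultimately show ?thesis using x inv_inv by (auto simp: gran_def)
qed

lemma comp_dr: "(x,y) \<in> G2 \<Longrightarrow> dd x = rr y"
proof -
  assume xy: "(x,y) \<in> G2"
  have x: "x \<in> G" and y: "y \<in> G" using comp_G xy by auto
  have 1: "(ginv x, x) \<in> G2" using comp_inv x by auto
  from assoc[OF 1 xy] have a: "(gmul (ginv x) x, y) \<in> G2" "gmul (gmul (ginv x) x) y = gmul (ginv x) (gmul x y)" by auto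
  hence b: "gmul (dd x) y = y" using canc[OF xy] by (simp add: gdom_def)
  have 2: "(y, ginv y) \<in> G2" using comp_inv2 y by auto
  from assoc[OF a(1) 2] have "gmul (gmul (dd x) y) (ginv y) = gmul (dd x) (gmul y (ginv y))" by (simp add: gdom_def)
  moreover have "gmul (gmul (dd x) y) (ginv y) = dd x" using canc[OF a(1)] by (simp add: gdom_def)
  ultimately show ?thesis using b by (simp add: gran_def)
qed

lemma dr_comp: "x \<in> G \<Longrightarrow> y \<in> G \<Longrightarrow> dd x = rr y \<Longrightarrow> (x,y) \<in> G2"
proof -
  assume x: "x \<in> G" and y: "y \<in> G" and e: "dd x = rr y"
  have 1: "(x, dd x) \<in> G2" using mul_d x by auto
  have 2: "(rr y, y) \<in> G2" using mul_r y by auto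
  from assoc[of x "dd x" y] 1 2 e have "(x, gmul (dd x) y) \<in> G2" by auto
  thus ?thesis using e mul_r y by auto
qed

lemma comp_iff: "(x,y) \<in> G2 \<longleftrightarrow> x \<in> G \<and> y \<in> G \<and> dd x = rr y"
  using comp_dr dr_comp comp_G by blast

lemma d_mul: "(x,y) \<in> G2 \<Longrightarrow> dd (gmul x y) = dd y"
proof -
  assume xy: "(x,y) \<in> G2"
  have "(gmul x y, ginv y) \<in> G2 \<Longrightarrow> True" by simp
  have y: "y \<in> G" using comp_G xy by auto
  have "(gmul x y, ginv y) \<in> G2" using assoc[OF xy comp_inv2[OF y]] by auto
  hence "dd (gmul x y) = rr (ginv y)" using comp_dr by auto
  also have "rr (ginv y) = dd y" using inv_inv y by (simp add: gran_def gdom_def)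
  finally show ?thesis .
qed

lemma r_mul: "(x,y) \<in> G2 \<Longrightarrow> rr (gmul x y) = rr x"
proof -
  assume xy: "(x,y) \<in> G2"
  have x: "x \<in> G" using comp_G xy by auto
  have "(ginv x, x) \<in> G2" using comp_inv x by auto
  hence "(ginv x, gmul x y) \<in> G2" using assoc[of "ginv x" x y] xy by auto
  hence "dd (ginv x) = rr (gmul x y)" using comp_dr by auto
  thus ?thesis using inv_inv x by (simp add: gran_def gdom_def)
qed

lemma d_inv: "x \<in> G \<Longrightarrow> dd (ginv x) = rr x" using inv_inv by (simp add: gran_def gdom_def)
lemma r_inv: "x \<in> G \<Longrightarrow> rr (ginv x) = dd x" using inv_inv by (simp add: gran_def gdom_def)

lemma dd_dd: "x \<in> G \<Longrightarrow> dd (dd x) = dd x"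
  using d_mul[OF comp_inv] by (simp add: gdom_def)
lemma rr_dd: "x \<in> G \<Longrightarrow> rr (dd x) = dd x"
  using r_mul[OF comp_inv] r_inv by (simp add: gdom_def)


definition unit :: "'g \<Rightarrow> bool" where "unit v \<longleftrightarrow> v \<in> G \<and> dd v = v"

lemma unit_space_iff: "v \<in> unit_space T gmul ginv \<longleftrightarrow> unit v"
  unfolding unit_space_def unit_def using d_G dd_dd by force

lemma unit_r: "unit v \<Longrightarrow> rr v = v" unfolding unit_def using rr_dd by metis
lemma unit_mul_left: "unit v \<Longrightarrow> (v, y) \<in> G2 \<Longrightarrow> gmul v y = y"
  using comp_dr mul_r comp_G unfolding unit_def by metis
lemma unit_mul_right: "unit v \<Longrightarrow> (y, v) \<in> G2 \<Longrightarrow> gmul y v = y"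
  using comp_dr mul_d comp_G unit_r unfolding unit_def by metis
lemma unit_dd: "x \<in> G \<Longrightarrow> unit (dd x)" unfolding unit_def using d_G dd_dd by auto
lemma unit_rr: "x \<in> G \<Longrightarrow> unit (rr x)" unfolding unit_def using r_G r_inv d_G dd_dd
  by (metis d_inv inv_G)

lemma left_solve: "(p,q) \<in> G2 \<Longrightarrow> gmul p q = b \<Longrightarrow> q = gmul (ginv p) b"
  using canc by auto

lemma tr_comp: "a \<in> G \<Longrightarrow> b \<in> G \<Longrightarrow> rr b = rr a \<Longrightarrow> (ginv a, b) \<in> G2"
  using comp_iff d_inv inv_G by auto

lemma tr_mul: "a \<in> G \<Longrightarrow> b \<in> G \<Longrightarrow> rr b = rr a \<Longrightarrow> gmul a (gmul (ginv a) b) = b"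
  using canc[OF tr_comp, of a b] inv_inv by auto

lemma tr_r: "a \<in> G \<Longrightarrow> b \<in> G \<Longrightarrow> rr b = rr a \<Longrightarrow> rr (gmul (ginv a) b) = dd a"
  using r_mul[OF tr_comp, of a b] r_inv by auto

lemma tr_d: "a \<in> G \<Longrightarrow> b \<in> G \<Longrightarrow> rr b = rr a \<Longrightarrow> dd (gmul (ginv a) b) = dd b"
  using d_mul[OF tr_comp, of a b] by auto

lemma tr_G: "a \<in> G \<Longrightarrow> b \<in> G \<Longrightarrow> rr b = rr a \<Longrightarrow> gmul (ginv a) b \<in> G"
  using mul_G[OF tr_comp] by auto

lemma inv_mul_tr: assumes "(x, a) \<in> G2" "b \<in> G" "rr b = rr x"
  shows "gmul (ginv (gmul x a)) b = gmul (ginv a) (gmul (ginv x) b)"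
proof -
  have x: "x \<in> G" and a: "a \<in> G" using assms comp_G by auto
  let ?q = "gmul (ginv x) b"
  have q: "?q \<in> G" "rr ?q = dd x" "gmul x ?q = b" using tr_G tr_r tr_mul x assms by auto
  have "rr ?q = rr a" using q comp_dr assms(1) by auto
  hence q2: "gmul (ginv a) ?q \<in> G" "rr (gmul (ginv a) ?q) = dd a" "gmul a (gmul (ginv a) ?q) = ?q"
    using tr_G tr_r tr_mul a q by auto
  have c2: "(a, gmul (ginv a) ?q) \<in> G2" using comp_iff q2 a by auto
  from assoc[OF assms(1) c2] have "(gmul x a, gmul (ginv a) ?q) \<in> G2"
     "gmul (gmul x a) (gmul (ginv a) ?q) = b" using q2 q by auto
  thus ?thesis using left_solve by metis
qed

end


locale agpd = gpd T G2 gmul ginv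
  for T :: "'g topology" and G2 :: "('g \<times> 'g) set" and gmul :: "'g \<Rightarrow> 'g \<Rightarrow> 'g" and ginv :: "'g \<Rightarrow> 'g" +
  assumes ample: "ample_groupoid T G2 gmul ginv" and haus: "Hausdorff_space T"
begin

lemma etale: "etale_groupoid T G2 gmul ginv" using ample unfolding ample_groupoid_def by auto
lemma topg: "topological_groupoid T G2 gmul ginv" using etale unfolding etale_groupoid_def by auto

lemma dd_cont: "continuous_map T T dd"
proof -
  have m: "continuous_map (subtopology (prod_topology T T) G2) T (\<lambda>(x,y). gmul x y)"
    and i: "continuous_map T T ginv" using topg unfolding topological_groupoid_def by auto
  have p: "continuous_map T (prod_topology T T) (\<lambda>x. (ginv x, x))"
    by (intro continuous_map_pairedI i continuous_map_id[unfolded id_def])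
  have p2: "continuous_map T (subtopology (prod_topology T T) G2) (\<lambda>x. (ginv x, x))"
    by (rule continuous_map_into_subtopology[OF p]) (use comp_inv in auto)
  have "continuous_map T T ((\<lambda>(x,y). gmul x y) \<circ> (\<lambda>x. (ginv x, x)))"
    by (rule continuous_map_compose[OF p2 m])
  thus ?thesis by (simp add: o_def gdom_def[abs_def])
qed

lemma unit_nbhd: assumes "unit v" shows "\<exists>U. openin T U \<and> v \<in> U \<and> (\<forall>y\<in>U. unit y)"
proof -
  have v: "v \<in> G" using assms unit_def by auto
  obtain U where U: "openin T U" "v \<in> U"
    "homeomorphic_map (subtopology T U) (subtopology T (dd ` U)) dd"
    using etale v unfolding etale_groupoid_def by blast
  have UG: "U \<subseteq> G" using U openin_subset by auto
  have inj: "inj_on dd U" using homeomorphic_imp_injective_map[OF U(3)] UG by (simp add: Int_absorb1)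
  let ?U = "{y \<in> G. dd y \<in> U} \<inter> U"
  have "openin T ?U" using openin_continuous_map_preimage[OF dd_cont U(1)] U(1) by auto
  moreover have "v \<in> ?U" using assms U v unit_def by auto
  moreover have "\<forall>y\<in>?U. unit y"
  proof
    fix y assume y: "y \<in> ?U"
    hence "dd (dd y) = dd y" "y \<in> G" using dd_dd by auto
    hence "dd y = y" using inj y unfolding inj_on_def by blast
    thus "unit y" using y unit_def by auto
  qed
  ultimately show ?thesis by blast
qed

lemma bisec_nbhd: "x \<in> W \<Longrightarrow> openin T W \<Longrightarrow>
   \<exists>B. open_bisection T gmul ginv B \<and> compactin T B \<and> x \<in> B \<and> B \<subseteq> W"
  using ample unfolding ample_groupoid_def by blast

lemma bisec_open: "open_bisection T gmul ginv B \<Longrightarrow> openin T B"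
  unfolding open_bisection_def by auto

lemma bisec_inj: assumes "open_bisection T gmul ginv B" shows "inj_on dd B" "inj_on rr B"
proof -
  have "B \<subseteq> G" using assms openin_subset unfolding open_bisection_def by auto
  thus "inj_on dd B" "inj_on rr B" using assms homeomorphic_imp_injective_map unfolding open_bisection_def
    by (metis Int_absorb1 topspace_subtopology)+
qed

lemma unit_co: assumes "unit v" "openin T W" "v \<in> W"
  shows "\<exists>B. compactin T B \<and> openin T B \<and> v \<in> B \<and> B \<subseteq> W \<and> (\<forall>y\<in>B. unit y)"
proof -
  obtain U where U: "openin T U" "v \<in> U" "\<forall>y\<in>U. unit y" using unit_nbhd assms by blast
  obtain B where "open_bisection T gmul ginv B" "compactin T B" "v \<in> B" "B \<subseteq> W \<inter> U"
    using bisec_nbhd[of v "W \<inter> U"] U assms by blast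
  thus ?thesis using bisec_open U by blast
qed

lemma units_co: assumes "finite F" "\<forall>v\<in>F. unit v"
  shows "\<exists>W. compactin T W \<and> openin T W \<and> F \<subseteq> W \<and> (\<forall>y\<in>W. unit y)"
  using assms
proof (induction F rule: finite_induct)
  case empty show ?case by (rule exI[of _ "{}"]) auto
next
  case (insert v F)
  then obtain W where W: "compactin T W" "openin T W" "F \<subseteq> W" "\<forall>y\<in>W. unit y" by auto
  obtain B where B: "compactin T B" "openin T B" "v \<in> B" "\<forall>y\<in>B. unit y"
    using unit_co[of v G] insert unit_def by auto
  show ?case using W B by (intro exI[of _ "W \<union> B"]) (auto intro: compactin_Un)
qed

lemma fiber_finite:
  assumes a: "a \<in> steinberg_carrier T" and h: "h = dd \<or> h = rr"
  shows "finite {\<gamma>. a \<gamma> \<noteq> 0 \<and> h \<gamma> = v}"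
proof -
  let ?S = "{x \<in> G. a x \<noteq> 0}"
  let ?K = "T closure_of ?S"
  have K: "compactin T ?K" and z: "\<forall>x. x \<notin> G \<longrightarrow> a x = 0" using a unfolding steinberg_carrier_def by auto
  let ?U = "{B. open_bisection T gmul ginv B}"
  have "?K \<subseteq> \<Union>?U"
  proof
    fix x assume "x \<in> ?K"
    thus "x \<in> \<Union>?U" using closure_of_subset_topspace[of T ?S] bisec_nbhd[of x G] by blast
  qed

  then obtain F where F: "finite F" "F \<subseteq> ?U" "?K \<subseteq> \<Union>F"
    using K unfolding compactin_def using bisec_open by (smt (verit, ccfv_SIG) mem_Collect_eq)
  have sub: "{\<gamma>. a \<gamma> \<noteq> 0 \<and> h \<gamma> = v} \<subseteq> (\<Union>B\<in>F. {\<gamma>\<in>B. h \<gamma> = v})"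
  proof
    fix g assume g: "g \<in> {\<gamma>. a \<gamma> \<noteq> 0 \<and> h \<gamma> = v}"
    hence "g \<in> ?S" using z by auto
    hence "g \<in> ?K" using closure_of_subset[of ?S T] by auto
    thus "g \<in> (\<Union>B\<in>F. {\<gamma>\<in>B. h \<gamma> = v})" using F g by auto
  qed
  have "\<forall>B\<in>F. finite {\<gamma>\<in>B. h \<gamma> = v}"
  proof
    fix B assume "B \<in> F"
    hence inj: "inj_on h B" using bisec_inj F h by auto
    have "{\<gamma>\<in>B. h \<gamma> = v} \<subseteq> {}  \<or> (\<exists>g. {\<gamma>\<in>B. h \<gamma> = v} \<subseteq> {g})"
      using inj unfolding inj_on_def by blast
    thus "finite {\<gamma>\<in>B. h \<gamma> = v}" using finite_subset by blast
  qed
  thus ?thesis using sub F(1) finite_subset by blast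
qed

end


context agpd begin

definition Fr where
  "Fr a v = {\<gamma> \<in> topspace T. gran gmul ginv \<gamma> = v \<and> a \<gamma> \<noteq> 0}"

lemma Fr_finite: "a \<in> steinberg_carrier T \<Longrightarrow> finite (Fr a v)"
  using fiber_finite[of a rr v] unfolding Fr_def by (auto elim: finite_subset[rotated])

lemma carrier_zero: "a \<in> steinberg_carrier T \<Longrightarrow> x \<notin> G \<Longrightarrow> a x = 0"
  unfolding steinberg_carrier_def by auto

lemma conv_eq:
  assumes a: "a \<in> steinberg_carrier T" and q: "q \<in> G"
  shows "convolution T G2 gmul a b q = (\<Sum>\<gamma>\<in>Fr a (rr q). a \<gamma> * b (gmul (ginv \<gamma>) q))"
proof -
  let ?P = "{(\<alpha>, \<beta>). (\<alpha>, \<beta>) \<in> G2 \<and> gmul \<alpha> \<beta> = q \<and> a \<alpha> \<noteq> 0 \<and> b \<beta> \<noteq> 0}"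
  let ?h = "\<lambda>\<gamma>. (\<gamma>, gmul (ginv \<gamma>) q)"
  let ?F = "{\<gamma> \<in> Fr a (rr q). b (gmul (ginv \<gamma>) q) \<noteq> 0}"
  have P: "?P = ?h ` ?F"
  proof
    show "?P \<subseteq> ?h ` ?F"
    proof
      fix p assume "p \<in> ?P"
      then obtain \<alpha> \<beta> where p: "p = (\<alpha>,\<beta>)" "(\<alpha>, \<beta>) \<in> G2" "gmul \<alpha> \<beta> = q" "a \<alpha> \<noteq> 0" "b \<beta> \<noteq> 0" by auto
      have "\<beta> = gmul (ginv \<alpha>) q" using left_solve p by auto
      moreover have "\<alpha> \<in> G" "rr \<alpha> = rr q" using p comp_G r_mul by auto
      ultimately show "p \<in> ?h ` ?F" using p unfolding Fr_def by auto
    qed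
  next
    show "?h ` ?F \<subseteq> ?P"
    proof
      fix p assume "p \<in> ?h ` ?F"
      then obtain \<gamma> where g: "p = ?h \<gamma>" "\<gamma> \<in> G" "rr \<gamma> = rr q" "a \<gamma> \<noteq> 0" "b (gmul (ginv \<gamma>) q) \<noteq> 0"
        unfolding Fr_def by auto
      have "(\<gamma>, gmul (ginv \<gamma>) q) \<in> G2" using comp_iff g tr_r tr_G q by auto
      moreover have "gmul \<gamma> (gmul (ginv \<gamma>) q) = q" using tr_mul g q by auto
      ultimately show "p \<in> ?P" using g by auto
    qed
  qed
  have inj: "inj_on ?h ?F" by (auto simp: inj_on_def)
  have "convolution T G2 gmul a b q = (\<Sum>p\<in>?P. a (fst p) * b (snd p))"
    using q unfolding convolution_def by simp
  also have "\<dots> = (\<Sum>\<gamma>\<in>?F. a \<gamma> * b (gmul (ginv \<gamma>) q))"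
    unfolding P by (subst sum.reindex[OF inj]) simp
  also have "\<dots> = (\<Sum>\<gamma>\<in>Fr a (rr q). a \<gamma> * b (gmul (ginv \<gamma>) q))"
    by (rule sum.mono_neutral_left) (use Fr_finite[OF a] in auto)
  finally show ?thesis .
qed

definition ind :: "'g set \<Rightarrow> 'r::field \<Rightarrow> 'g \<Rightarrow> 'r" where
  "ind K c = (\<lambda>x. if x \<in> K then c else 0)"

lemma ind2_carrier:
  fixes c1 c2 :: "'r::field"
  assumes K1: "compactin T K1" "openin T K1" and K2: "compactin T K2" "openin T K2"
  shows "(\<lambda>x. ind K1 c1 x + ind K2 c2 x) \<in> steinberg_carrier T"
proof -
  have C1: "closedin T K1" by (rule compactin_imp_closedin[OF haus K1(1)])
  have C2: "closedin T K2" by (rule compactin_imp_closedin[OF haus K2(1)])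
  have KG1: "K1 \<subseteq> G" by (rule openin_subset[OF K1(2)])
  have KG2: "K2 \<subseteq> G" by (rule openin_subset[OF K2(2)])
  let ?f = "\<lambda>x. ind K1 c1 x + ind K2 c2 x"
  have "\<forall>x. x \<notin> G \<longrightarrow> ?f x = 0"
  proof (intro allI impI)
    fix x assume "x \<notin> G" hence "x \<notin> K1" "x \<notin> K2" using KG1 KG2 by auto
    thus "?f x = 0" by (simp add: ind_def)
  qed
  moreover have "locally_constant T ?f"
    unfolding locally_constant_def
  proof
    fix x assume x: "x \<in> G"
    let ?U1 = "if x \<in> K1 then K1 else G - K1"
    let ?U2 = "if x \<in> K2 then K2 else G - K2"
    have "openin T ?U1" using K1 C1 by (cases "x \<in> K1") auto
    moreover have "openin T ?U2" using K2 C2 by (cases "x \<in> K2") auto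
    ultimately have "openin T (?U1 \<inter> ?U2)" by (rule openin_Int)
    moreover have "x \<in> ?U1 \<inter> ?U2" using x by simp
    moreover have "\<forall>y\<in>?U1 \<inter> ?U2. ?f y = ?f x"
    proof
      fix y assume "y \<in> ?U1 \<inter> ?U2"
      thus "?f y = ?f x" by (cases "x \<in> K1"; cases "x \<in> K2"; simp add: ind_def)
    qed
    ultimately show "\<exists>U. openin T U \<and> x \<in> U \<and> (\<forall>y\<in>U. ?f y = ?f x)" by blast
  qed
  moreover have "compactin T (T closure_of {x \<in> G. ?f x \<noteq> 0})"
  proof -
    have "{x \<in> G. ?f x \<noteq> 0} \<subseteq> K1 \<union> K2" by (auto simp: ind_def)
    hence "T closure_of {x \<in> G. ?f x \<noteq> 0} \<subseteq> K1 \<union> K2" 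
      by (rule closure_of_minimal) (use C1 C2 in auto)
    thus ?thesis by (rule closed_compactin[OF compactin_Un[OF K1(1) K2(1)]]) (rule closedin_closure_of)
  qed
  ultimately show ?thesis unfolding steinberg_carrier_def mem_Collect_eq by (intro conjI)
qed

lemma ind_carrier: "ind K c \<in> steinberg_carrier T" if "compactin T K" "openin T K"
proof -
  have "(\<lambda>x. ind K c x + ind {} 0 x) = ind K c" by (simp add: ind_def fun_eq_iff)
  thus ?thesis using ind2_carrier[of K "{}" c 0] that by simp
qed


lemma carrier_add:
  fixes a b :: "'g \<Rightarrow> 'r::field"
  assumes a: "a \<in> steinberg_carrier T" and b: "b \<in> steinberg_carrier T"
  shows "(\<lambda>x. a x + b x) \<in> steinberg_carrier T"
proof -
  let ?f = "\<lambda>x. a x + b x"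
  have z: "\<forall>x. x \<notin> G \<longrightarrow> ?f x = 0" using carrier_zero[OF a] carrier_zero[OF b] by simp
  have la: "locally_constant T a" using a unfolding steinberg_carrier_def by simp
  have lb: "locally_constant T b" using b unfolding steinberg_carrier_def by simp
  have "locally_constant T ?f" unfolding locally_constant_def
  proof
    fix x assume x: "x \<in> G"
    obtain U where U: "openin T U" "x \<in> U" "\<forall>y\<in>U. a y = a x" using la x unfolding locally_constant_def by blast
    obtain V where V: "openin T V" "x \<in> V" "\<forall>y\<in>V. b y = b x" using lb x unfolding locally_constant_def by blast
    have o: "openin T (U \<inter> V)" using U(1) V(1) by (rule openin_Int)
    have e: "\<forall>y\<in>U \<inter> V. ?f y = ?f x" using U(3) V(3) by simp
    have "x \<in> U \<inter> V" using U(2) V(2) by simp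
    thus "\<exists>W. openin T W \<and> x \<in> W \<and> (\<forall>y\<in>W. ?f y = ?f x)" using o e by blast
  qed
  moreover have "compactin T (T closure_of {x \<in> G. ?f x \<noteq> 0})"
  proof -
    let ?A = "{x \<in> G. a x \<noteq> 0}" and ?B = "{x \<in> G. b x \<noteq> 0}"
    have ca: "compactin T (T closure_of ?A)" using a unfolding steinberg_carrier_def by simp
    have cb: "compactin T (T closure_of ?B)" using b unfolding steinberg_carrier_def by simp
    have "{x \<in> G. ?f x \<noteq> 0} \<subseteq> ?A \<union> ?B" by auto
    hence "T closure_of {x \<in> G. ?f x \<noteq> 0} \<subseteq> T closure_of (?A \<union> ?B)" by (rule closure_of_mono)
    also have "\<dots> = T closure_of ?A \<union> T closure_of ?B" by (rule closure_of_Un)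
    finally show ?thesis by (rule closed_compactin[OF compactin_Un[OF ca cb]]) (rule closedin_closure_of)
  qed
  ultimately show ?thesis using z unfolding steinberg_carrier_def mem_Collect_eq by (intro conjI)
qed

end


context agpd begin

definition supp :: "(_ \<Rightarrow> 'r::field) \<Rightarrow> _" where "supp m = {\<alpha>. m \<alpha> \<noteq> 0}"

definition tr :: "(_ \<Rightarrow> 'r::field) \<Rightarrow> _ \<Rightarrow> _ \<Rightarrow> 'r" where
  "tr a \<alpha> \<beta> = (if \<beta> \<in> topspace T \<and> gran gmul ginv \<beta> = gran gmul ginv \<alpha> then a (gmul (ginv \<alpha>) \<beta>) else 0)"

definition actR :: "(_ \<Rightarrow> 'r::field) \<Rightarrow> (_ \<Rightarrow> 'r) \<Rightarrow> _ \<Rightarrow> 'r" where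
  "actR m a \<beta> = (\<Sum>\<alpha>\<in>supp m. m \<alpha> * tr a \<alpha> \<beta>)"

definition actL :: "(_ \<Rightarrow> 'r::field) \<Rightarrow> (_ \<Rightarrow> 'r) \<Rightarrow> _ \<Rightarrow> 'r" where
  "actL a n v = (\<Sum>\<gamma>\<in>Fr a v. a \<gamma> * n (gdom gmul ginv \<gamma>))"

definition Phi :: "(_ \<Rightarrow> 'r::field) \<Rightarrow> (_ \<Rightarrow> 'r) \<Rightarrow> 'r" where
  "Phi m n = (\<Sum>\<alpha>\<in>supp m. m \<alpha> * n (gdom gmul ginv \<alpha>))"

lemma trans_sum:
  fixes a :: "'g \<Rightarrow> 'r::field"
  assumes al: "\<alpha> \<in> G" and X: "finite X" "(gmul \<alpha>) ` Fr a (dd \<alpha>) \<subseteq> X"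
  shows "(\<Sum>p\<in>X. tr a \<alpha> p * H p) = (\<Sum>\<gamma>\<in>Fr a (dd \<alpha>). a \<gamma> * H (gmul \<alpha> \<gamma>))"
proof -
  have inj: "inj_on (gmul \<alpha>) (Fr a (dd \<alpha>))"
  proof (rule inj_onI)
    fix g1 g2 assume g: "g1 \<in> Fr a (dd \<alpha>)" "g2 \<in> Fr a (dd \<alpha>)" "gmul \<alpha> g1 = gmul \<alpha> g2"
    have "(\<alpha>, g1) \<in> G2" "(\<alpha>, g2) \<in> G2" using g al comp_iff unfolding Fr_def by auto
    thus "g1 = g2" using left_solve g(3) by metis
  qed
  have vals: "tr a \<alpha> (gmul \<alpha> \<gamma>) = a \<gamma>" if "\<gamma> \<in> Fr a (dd \<alpha>)" for \<gamma>
  proof -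
    have c: "(\<alpha>, \<gamma>) \<in> G2" using that al comp_iff unfolding Fr_def by auto
    thus ?thesis using mul_G[OF c] r_mul[OF c] canc[OF c] unfolding tr_def by auto
  qed
  have "(\<Sum>p\<in>X. tr a \<alpha> p * H p) = (\<Sum>p\<in>(gmul \<alpha>) ` Fr a (dd \<alpha>). tr a \<alpha> p * H p)"
  proof (rule sum.mono_neutral_right[OF X(1) X(2)], rule ballI)
    fix p assume p: "p \<in> X - gmul \<alpha> ` Fr a (dd \<alpha>)"
    show "tr a \<alpha> p * H p = 0"
    proof (cases "p \<in> G \<and> rr p = rr \<alpha> \<and> a (gmul (ginv \<alpha>) p) \<noteq> 0")
      case True
      hence "gmul (ginv \<alpha>) p \<in> Fr a (dd \<alpha>)" using tr_G tr_r al unfolding Fr_def by auto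
      moreover have "gmul \<alpha> (gmul (ginv \<alpha>) p) = p" using tr_mul True al by auto
      ultimately show ?thesis using p by (metis Diff_iff imageI)
    next
      case False thus ?thesis unfolding tr_def by auto
    qed
  qed
  also have "\<dots> = (\<Sum>\<gamma>\<in>Fr a (dd \<alpha>). a \<gamma> * H (gmul \<alpha> \<gamma>))"
    by (subst sum.reindex[OF inj]) (simp add: vals)
  finally show ?thesis .
qed

lemma actR_sup: "finite X \<Longrightarrow> supp m \<subseteq> X \<Longrightarrow> actR m a \<beta> = (\<Sum>\<alpha>\<in>X. m \<alpha> * tr a \<alpha> \<beta>)"
  unfolding actR_def by (rule sum.mono_neutral_left) (auto simp: supp_def)

lemma Phi_sup: "finite X \<Longrightarrow> supp m \<subseteq> X \<Longrightarrow> Phi m n = (\<Sum>\<alpha>\<in>X. m \<alpha> * n (dd \<alpha>))"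
  unfolding Phi_def by (rule sum.mono_neutral_left) (auto simp: supp_def)

lemma actL_sup: "finite X \<Longrightarrow> Fr a v \<subseteq> X \<Longrightarrow> X \<subseteq> {\<gamma>\<in>G. rr \<gamma> = v} \<Longrightarrow>
   actL a n v = (\<Sum>\<gamma>\<in>X. a \<gamma> * n (dd \<gamma>))"
  unfolding actL_def by (rule sum.mono_neutral_left) (auto simp: Fr_def)

lemma supp_add: "supp (\<lambda>x. m x + m' x) \<subseteq> supp m \<union> supp m'" by (auto simp: supp_def)
lemma supp_diff: "supp (\<lambda>x. m x - m' x) \<subseteq> supp m \<union> supp m'" by (auto simp: supp_def)

lemma actR_add1: assumes "finite (supp m)" "finite (supp m')"
  shows "actR (\<lambda>x. m x + m' x) a \<beta> = actR m a \<beta> + actR m' a \<beta>"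
proof -
  have f: "finite (supp m \<union> supp m')" using assms by auto
  have "actR (\<lambda>x. m x + m' x) a \<beta> = (\<Sum>\<alpha>\<in>supp m \<union> supp m'. (m \<alpha> + m' \<alpha>) * tr a \<alpha> \<beta>)"
    by (rule actR_sup[OF f]) (rule supp_add)
  moreover have "actR m a \<beta> = (\<Sum>\<alpha>\<in>supp m \<union> supp m'. m \<alpha> * tr a \<alpha> \<beta>)" by (rule actR_sup[OF f]) auto
  moreover have "actR m' a \<beta> = (\<Sum>\<alpha>\<in>supp m \<union> supp m'. m' \<alpha> * tr a \<alpha> \<beta>)" by (rule actR_sup[OF f]) auto
  ultimately show ?thesis by (simp add: sum.distrib distrib_right)
qed

lemma actR_diff1: assumes "finite (supp m)" "finite (supp m')"
  shows "actR (\<lambda>x. m x - m' x) a \<beta> = actR m a \<beta> - actR m' a \<beta>"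
proof -
  have f: "finite (supp m \<union> supp m')" using assms by auto
  have "actR (\<lambda>x. m x - m' x) a \<beta> = (\<Sum>\<alpha>\<in>supp m \<union> supp m'. (m \<alpha> - m' \<alpha>) * tr a \<alpha> \<beta>)"
    by (rule actR_sup[OF f]) (rule supp_diff)
  moreover have "actR m a \<beta> = (\<Sum>\<alpha>\<in>supp m \<union> supp m'. m \<alpha> * tr a \<alpha> \<beta>)" by (rule actR_sup[OF f]) auto
  moreover have "actR m' a \<beta> = (\<Sum>\<alpha>\<in>supp m \<union> supp m'. m' \<alpha> * tr a \<alpha> \<beta>)" by (rule actR_sup[OF f]) auto
  ultimately show ?thesis by (simp add: sum_subtractf left_diff_distrib)
qed

lemma actR_add2: "actR m (\<lambda>x. a x + b x) \<beta> = actR m a \<beta> + actR m b \<beta>"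
  unfolding actR_def sum.distrib[symmetric] by (rule sum.cong) (auto simp: tr_def distrib_left)

lemma Phi_add1: assumes "finite (supp m)" "finite (supp m')"
  shows "Phi (\<lambda>x. m x + m' x) n = Phi m n + Phi m' n"
proof -
  have f: "finite (supp m \<union> supp m')" using assms by auto
  have "Phi (\<lambda>x. m x + m' x) n = (\<Sum>\<alpha>\<in>supp m \<union> supp m'. (m \<alpha> + m' \<alpha>) * n (dd \<alpha>))"
    by (rule Phi_sup[OF f]) (rule supp_add)
  moreover have "Phi m n = (\<Sum>\<alpha>\<in>supp m \<union> supp m'. m \<alpha> * n (dd \<alpha>))" by (rule Phi_sup[OF f]) auto
  moreover have "Phi m' n = (\<Sum>\<alpha>\<in>supp m \<union> supp m'. m' \<alpha> * n (dd \<alpha>))" by (rule Phi_sup[OF f]) auto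
  ultimately show ?thesis by (simp add: sum.distrib distrib_right)
qed

lemma Phi_add2: "Phi m (\<lambda>x. n x + n' x) = Phi m n + Phi m n'"
  unfolding Phi_def by (simp add: sum.distrib distrib_left)

lemma actL_add1: assumes "a \<in> steinberg_carrier T" "b \<in> steinberg_carrier T"
  shows "actL (\<lambda>x. a x + b x) n v = actL a n v + actL b n v"
proof -
  have f: "finite (Fr a v \<union> Fr b v)" using Fr_finite assms by auto
  have s: "Fr a v \<union> Fr b v \<subseteq> {\<gamma>\<in>G. rr \<gamma> = v}" by (auto simp: Fr_def)
  have sb: "Fr (\<lambda>x. a x + b x) v \<subseteq> Fr a v \<union> Fr b v" by (auto simp: Fr_def)
  have 1: "actL (\<lambda>x. a x + b x) n v = (\<Sum>\<gamma>\<in>Fr a v \<union> Fr b v. (a \<gamma> + b \<gamma>) * n (dd \<gamma>))"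
    by (rule actL_sup[OF f sb s])
  have 2: "actL a n v = (\<Sum>\<gamma>\<in>Fr a v \<union> Fr b v. a \<gamma> * n (dd \<gamma>))" by (rule actL_sup[OF f _ s]) auto
  have 3: "actL b n v = (\<Sum>\<gamma>\<in>Fr a v \<union> Fr b v. b \<gamma> * n (dd \<gamma>))" by (rule actL_sup[OF f _ s]) auto
  show ?thesis unfolding 1 2 3 by (simp add: sum.distrib distrib_right)
qed

lemma actL_add2: "actL a (\<lambda>x. n x + n' x) v = actL a n v + actL a n' v"
  unfolding actL_def by (simp add: sum.distrib distrib_left)

end


context agpd begin

definition XR :: "('g \<Rightarrow> 'r::field) \<Rightarrow> ('g \<Rightarrow> 'r) \<Rightarrow> 'g set" where
  "XR m a = (\<lambda>(\<alpha>,\<gamma>). gmul \<alpha> \<gamma>) ` (SIGMA \<alpha>:supp m. Fr a (gdom gmul ginv \<alpha>))"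

lemma XR_finite: "finite (supp m) \<Longrightarrow> a \<in> steinberg_carrier T \<Longrightarrow> finite (XR m a)"
  unfolding XR_def by (intro finite_imageI finite_SigmaI) (simp_all add: Fr_finite)

lemma XR_sub: "\<alpha> \<in> supp m \<Longrightarrow> gmul \<alpha> ` Fr a (dd \<alpha>) \<subseteq> XR m a"
  unfolding XR_def by force

lemma supp_actR: assumes "supp m \<subseteq> G" shows "supp (actR m a) \<subseteq> XR m a"
proof
  fix p assume "p \<in> supp (actR m a)"
  hence "(\<Sum>\<alpha>\<in>supp m. m \<alpha> * tr a \<alpha> p) \<noteq> 0" unfolding actR_def supp_def[of "actR m a"] by simp
  then obtain \<alpha> where al: "\<alpha> \<in> supp m" "m \<alpha> * tr a \<alpha> p \<noteq> 0" by (rule sum.not_neutral_contains_not_neutral)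
  hence al: "\<alpha> \<in> supp m" "tr a \<alpha> p \<noteq> 0" by auto
  have aG: "\<alpha> \<in> G" using al assms by auto
  have p: "p \<in> G" "rr p = rr \<alpha>" "a (gmul (ginv \<alpha>) p) \<noteq> 0" using al(2) unfolding tr_def by (auto split: if_splits)
  hence "gmul (ginv \<alpha>) p \<in> Fr a (dd \<alpha>)" using tr_G tr_r aG unfolding Fr_def by auto
  moreover have "gmul \<alpha> (gmul (ginv \<alpha>) p) = p" using tr_mul p aG by auto
  ultimately show "p \<in> XR m a" using XR_sub[OF al(1), of a] by (metis image_subset_iff)
qed

lemma tr_conv:
  assumes a: "a \<in> steinberg_carrier T" and aG: "\<alpha> \<in> G"
  shows "tr (convolution T G2 gmul a b) \<alpha> \<beta> = (\<Sum>\<gamma>\<in>Fr a (dd \<alpha>). a \<gamma> * tr b (gmul \<alpha> \<gamma>) \<beta>)"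
proof (cases "\<beta> \<in> G \<and> rr \<beta> = rr \<alpha>")
  case True
  have q: "gmul (ginv \<alpha>) \<beta> \<in> G" "rr (gmul (ginv \<alpha>) \<beta>) = dd \<alpha>" using tr_G tr_r True aG by auto
  have "tr (convolution T G2 gmul a b) \<alpha> \<beta> = convolution T G2 gmul a b (gmul (ginv \<alpha>) \<beta>)"
    using True unfolding tr_def by simp
  also have "\<dots> = (\<Sum>\<gamma>\<in>Fr a (dd \<alpha>). a \<gamma> * b (gmul (ginv \<gamma>) (gmul (ginv \<alpha>) \<beta>)))"
    using conv_eq[OF a q(1)] q(2) by simp
  also have "\<dots> = (\<Sum>\<gamma>\<in>Fr a (dd \<alpha>). a \<gamma> * tr b (gmul \<alpha> \<gamma>) \<beta>)"
  proof (rule sum.cong[OF refl])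
    fix \<gamma> assume g: "\<gamma> \<in> Fr a (dd \<alpha>)"
    have c: "(\<alpha>, \<gamma>) \<in> G2" using g aG comp_iff unfolding Fr_def by auto
    have "tr b (gmul \<alpha> \<gamma>) \<beta> = b (gmul (ginv (gmul \<alpha> \<gamma>)) \<beta>)"
      using True r_mul[OF c] unfolding tr_def by simp
    also have "\<dots> = b (gmul (ginv \<gamma>) (gmul (ginv \<alpha>) \<beta>))" using inv_mul_tr[OF c] True by simp
    finally show "a \<gamma> * b (gmul (ginv \<gamma>) (gmul (ginv \<alpha>) \<beta>)) = a \<gamma> * tr b (gmul \<alpha> \<gamma>) \<beta>" by simp
  qed
  finally show ?thesis .
next
  case False
  have "tr b (gmul \<alpha> \<gamma>) \<beta> = 0" if g: "\<gamma> \<in> Fr a (dd \<alpha>)" for \<gamma>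
  proof -
    have c: "(\<alpha>, \<gamma>) \<in> G2" using g aG comp_iff unfolding Fr_def by auto
    thus ?thesis using False r_mul[OF c] unfolding tr_def by auto
  qed
  hence "(\<Sum>\<gamma>\<in>Fr a (dd \<alpha>). a \<gamma> * tr b (gmul \<alpha> \<gamma>) \<beta>) = 0" by simp
  moreover have "tr (convolution T G2 gmul a b) \<alpha> \<beta> = 0" using False unfolding tr_def by auto
  ultimately show ?thesis by simp
qed

lemma actR_assoc:
  assumes m: "finite (supp m)" "supp m \<subseteq> G" and a: "a \<in> steinberg_carrier T" and b: "b \<in> steinberg_carrier T"
  shows "actR (actR m a) b \<beta> = actR m (convolution T G2 gmul a b) \<beta>"
proof -
  have X: "finite (XR m a)" using XR_finite m a by auto
  have "actR (actR m a) b \<beta> = (\<Sum>p\<in>XR m a. actR m a p * tr b p \<beta>)"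
    by (rule actR_sup[OF X supp_actR[OF m(2)]])
  also have "\<dots> = (\<Sum>p\<in>XR m a. \<Sum>\<alpha>\<in>supp m. m \<alpha> * (tr a \<alpha> p * tr b p \<beta>))"
    unfolding actR_def by (simp add: sum_distrib_right mult.assoc)
  also have "\<dots> = (\<Sum>\<alpha>\<in>supp m. m \<alpha> * (\<Sum>p\<in>XR m a. tr a \<alpha> p * tr b p \<beta>))"
    by (subst sum.swap) (simp add: sum_distrib_left)
  also have "\<dots> = (\<Sum>\<alpha>\<in>supp m. m \<alpha> * tr (convolution T G2 gmul a b) \<alpha> \<beta>)"
  proof (rule sum.cong[OF refl])
    fix \<alpha> assume al: "\<alpha> \<in> supp m"
    hence aG: "\<alpha> \<in> G" using m by auto
    show "m \<alpha> * (\<Sum>p\<in>XR m a. tr a \<alpha> p * tr b p \<beta>) = m \<alpha> * tr (convolution T G2 gmul a b) \<alpha> \<beta>"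
      using trans_sum[OF aG X XR_sub[OF al]] tr_conv[OF a aG] by simp
  qed
  finally show ?thesis unfolding actR_def .
qed

lemma Phi_bal:
  assumes m: "finite (supp m)" "supp m \<subseteq> G" and a: "a \<in> steinberg_carrier T"
  shows "Phi (actR m a) n = Phi m (actL a n)"
proof -
  have X: "finite (XR m a)" using XR_finite m a by auto
  have "Phi (actR m a) n = (\<Sum>p\<in>XR m a. actR m a p * n (dd p))"
    by (rule Phi_sup[OF X supp_actR[OF m(2)]])
  also have "\<dots> = (\<Sum>p\<in>XR m a. \<Sum>\<alpha>\<in>supp m. m \<alpha> * (tr a \<alpha> p * n (dd p)))"
    unfolding actR_def by (simp add: sum_distrib_right mult.assoc)
  also have "\<dots> = (\<Sum>\<alpha>\<in>supp m. m \<alpha> * (\<Sum>p\<in>XR m a. tr a \<alpha> p * n (dd p)))"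
    by (subst sum.swap) (simp add: sum_distrib_left)
  also have "\<dots> = (\<Sum>\<alpha>\<in>supp m. m \<alpha> * actL a n (dd \<alpha>))"
  proof (rule sum.cong[OF refl])
    fix \<alpha> assume al: "\<alpha> \<in> supp m"
    hence aG: "\<alpha> \<in> G" using m by auto
    have "(\<Sum>p\<in>XR m a. tr a \<alpha> p * n (dd p)) = (\<Sum>\<gamma>\<in>Fr a (dd \<alpha>). a \<gamma> * n (dd (gmul \<alpha> \<gamma>)))"
      by (rule trans_sum[OF aG X XR_sub[OF al]])
    also have "\<dots> = actL a n (dd \<alpha>)" unfolding actL_def
    proof (rule sum.cong[OF refl])
      fix \<gamma> assume g: "\<gamma> \<in> Fr a (dd \<alpha>)"
      have c: "(\<alpha>, \<gamma>) \<in> G2" using g aG comp_iff unfolding Fr_def by auto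
      show "a \<gamma> * n (dd (gmul \<alpha> \<gamma>)) = a \<gamma> * n (dd \<gamma>)" using d_mul[OF c] by simp
    qed
    finally show "m \<alpha> * (\<Sum>p\<in>XR m a. tr a \<alpha> p * n (dd p)) = m \<alpha> * actL a n (dd \<alpha>)" by simp
  qed
  finally show ?thesis unfolding Phi_def .
qed

end


context agpd begin

definition XL :: "('g \<Rightarrow> 'r::field) \<Rightarrow> ('g \<Rightarrow> 'r) \<Rightarrow> 'g \<Rightarrow> 'g set" where
  "XL a b v = (\<lambda>(\<xi>,\<eta>). gmul \<xi> \<eta>) ` (SIGMA \<xi>:Fr a v. Fr b (gdom gmul ginv \<xi>))"

lemma XL_finite: "a \<in> steinberg_carrier T \<Longrightarrow> b \<in> steinberg_carrier T \<Longrightarrow> finite (XL a b v)"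
  unfolding XL_def by (intro finite_imageI finite_SigmaI) (simp_all add: Fr_finite)

lemma XL_sub: "\<xi> \<in> Fr a v \<Longrightarrow> gmul \<xi> ` Fr b (dd \<xi>) \<subseteq> XL a b v"
  unfolding XL_def by force

lemma XL_G: "XL a b v \<subseteq> {\<gamma>\<in>G. rr \<gamma> = v}"
proof
  fix g assume "g \<in> XL a b v"
  then obtain \<xi> \<eta> where e: "g = gmul \<xi> \<eta>" "\<xi> \<in> Fr a v" "\<eta> \<in> Fr b (dd \<xi>)" unfolding XL_def by auto
  have c: "(\<xi>, \<eta>) \<in> G2" using e comp_iff unfolding Fr_def by auto
  show "g \<in> {\<gamma>\<in>G. rr \<gamma> = v}" using mul_G[OF c] r_mul[OF c] e unfolding Fr_def by auto
qed

lemma Fr_conv_sub: assumes a: "a \<in> steinberg_carrier T"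
  shows "Fr (convolution T G2 gmul a b) v \<subseteq> XL a b v"
proof
  fix g assume g: "g \<in> Fr (convolution T G2 gmul a b) v"
  hence gG: "g \<in> G" "rr g = v" "convolution T G2 gmul a b g \<noteq> 0" unfolding Fr_def by auto
  hence "(\<Sum>\<gamma>\<in>Fr a v. a \<gamma> * b (gmul (ginv \<gamma>) g)) \<noteq> 0" using conv_eq[OF a gG(1)] by simp
  then obtain \<xi> where xi: "\<xi> \<in> Fr a v" "a \<xi> * b (gmul (ginv \<xi>) g) \<noteq> 0"
    by (rule sum.not_neutral_contains_not_neutral)
  have xiG: "\<xi> \<in> G" "rr \<xi> = v" using xi unfolding Fr_def by auto
  have "gmul (ginv \<xi>) g \<in> Fr b (dd \<xi>)" using tr_G tr_r xiG gG xi(2) unfolding Fr_def by auto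
  moreover have "gmul \<xi> (gmul (ginv \<xi>) g) = g" using tr_mul xiG gG by auto
  ultimately show "g \<in> XL a b v" using XL_sub[OF xi(1), of b] by (metis image_subset_iff)
qed

lemma actL_assoc:
  assumes a: "a \<in> steinberg_carrier T" and b: "b \<in> steinberg_carrier T"
  shows "actL (convolution T G2 gmul a b) n v = actL a (actL b n) v"
proof -
  have X: "finite (XL a b v)" using XL_finite a b by auto
  have "actL (convolution T G2 gmul a b) n v = (\<Sum>\<gamma>\<in>XL a b v. convolution T G2 gmul a b \<gamma> * n (dd \<gamma>))"
    by (rule actL_sup[OF X Fr_conv_sub[OF a] XL_G])
  also have "\<dots> = (\<Sum>\<gamma>\<in>XL a b v. \<Sum>\<xi>\<in>Fr a v. a \<xi> * (tr b \<xi> \<gamma> * n (dd \<gamma>)))"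
  proof (rule sum.cong[OF refl])
    fix g assume g: "g \<in> XL a b v"
    hence gG: "g \<in> G" "rr g = v" using XL_G by auto
    have "convolution T G2 gmul a b g = (\<Sum>\<xi>\<in>Fr a v. a \<xi> * tr b \<xi> g)"
      unfolding conv_eq[OF a gG(1)] gG(2)
      by (rule sum.cong[OF refl]) (use gG in \<open>auto simp: tr_def Fr_def\<close>)
    thus "convolution T G2 gmul a b g * n (dd g) = (\<Sum>\<xi>\<in>Fr a v. a \<xi> * (tr b \<xi> g * n (dd g)))"
      by (simp add: sum_distrib_right mult.assoc)
  qed
  also have "\<dots> = (\<Sum>\<xi>\<in>Fr a v. a \<xi> * (\<Sum>\<gamma>\<in>XL a b v. tr b \<xi> \<gamma> * n (dd \<gamma>)))"
    by (subst sum.swap) (simp add: sum_distrib_left)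
  also have "\<dots> = (\<Sum>\<xi>\<in>Fr a v. a \<xi> * actL b n (dd \<xi>))"
  proof (rule sum.cong[OF refl])
    fix \<xi> assume xi: "\<xi> \<in> Fr a v"
    hence xG: "\<xi> \<in> G" unfolding Fr_def by auto
    have "(\<Sum>\<gamma>\<in>XL a b v. tr b \<xi> \<gamma> * n (dd \<gamma>)) = (\<Sum>\<eta>\<in>Fr b (dd \<xi>). b \<eta> * n (dd (gmul \<xi> \<eta>)))"
      by (rule trans_sum[OF xG X XL_sub[OF xi]])
    also have "\<dots> = actL b n (dd \<xi>)" unfolding actL_def
    proof (rule sum.cong[OF refl])
      fix \<eta> assume e: "\<eta> \<in> Fr b (dd \<xi>)"
      have c: "(\<xi>, \<eta>) \<in> G2" using e xG comp_iff unfolding Fr_def by auto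
      show "b \<eta> * n (dd (gmul \<xi> \<eta>)) = b \<eta> * n (dd \<eta>)" using d_mul[OF c] by simp
    qed
    finally show "a \<xi> * (\<Sum>\<gamma>\<in>XL a b v. tr b \<xi> \<gamma> * n (dd \<gamma>)) = a \<xi> * actL b n (dd \<xi>)" by simp
  qed
  finally show ?thesis unfolding actL_def[of a] .
qed

end


locale stp = agpd T G2 gmul ginv
  for T :: "'g topology" and G2 :: "('g \<times> 'g) set" and gmul :: "'g \<Rightarrow> 'g \<Rightarrow> 'g" and ginv :: "'g \<Rightarrow> 'g" +
  fixes u :: 'g and x :: 'g
  assumes u: "unit u" and x: "x \<in> topspace T" "gdom gmul ginv x = u" "gran gmul ginv x = u"
begin

definition Mf :: "('g \<Rightarrow> 'r::field) set" where
  "Mf = {m. finite (supp m) \<and> supp m \<subseteq> {\<alpha>\<in>topspace T. gran gmul ginv \<alpha> = u}}"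

definition Orb :: "'g set" where "Orb = {gran gmul ginv \<gamma> | \<gamma>. \<gamma> \<in> topspace T \<and> gdom gmul ginv \<gamma> = u}"

definition Nf :: "('g \<Rightarrow> 'r::field) set" where
  "Nf = {n. finite (supp n) \<and> supp n \<subseteq> Orb}"

definition L :: "('g \<Rightarrow> 'r::field) \<Rightarrow> 'g \<Rightarrow> 'r" where
  "L m \<beta> = (if \<beta> \<in> topspace T \<and> gran gmul ginv \<beta> = u then m (gmul (ginv x) \<beta>) else 0)"

lemma uG: "u \<in> G" using u unit_def by auto

lemma Mf_zero: "(\<lambda>_. 0) \<in> Mf" by (simp add: Mf_def supp_def)
lemma Mf_add: "m \<in> Mf \<Longrightarrow> m' \<in> Mf \<Longrightarrow> (\<lambda>a. m a + m' a) \<in> Mf"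
  unfolding Mf_def using supp_add[of m m'] by (auto intro: finite_subset)
lemma Mf_diff: "m \<in> Mf \<Longrightarrow> m' \<in> Mf \<Longrightarrow> (\<lambda>a. m a - m' a) \<in> Mf"
  unfolding Mf_def using supp_diff[of m m'] by (auto intro: finite_subset)
lemma Mf_fin: "m \<in> Mf \<Longrightarrow> finite (supp m)" unfolding Mf_def by auto
lemma Mf_G: "m \<in> Mf \<Longrightarrow> supp m \<subseteq> G" unfolding Mf_def by auto

lemma Mf_actR: assumes m: "m \<in> Mf" and a: "a \<in> steinberg_carrier T" shows "actR m a \<in> Mf"
proof -
  have s: "supp (actR m a) \<subseteq> XR m a" using supp_actR Mf_G m by auto
  have "XR m a \<subseteq> {\<alpha>\<in>G. rr \<alpha> = u}"
  proof
    fix p assume "p \<in> XR m a"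
    then obtain \<alpha> \<gamma> where e: "p = gmul \<alpha> \<gamma>" "\<alpha> \<in> supp m" "\<gamma> \<in> Fr a (dd \<alpha>)" unfolding XR_def by auto
    have aG: "\<alpha> \<in> G" "rr \<alpha> = u" using e m unfolding Mf_def by auto
    have c: "(\<alpha>, \<gamma>) \<in> G2" using e aG comp_iff unfolding Fr_def by auto
    show "p \<in> {\<alpha>\<in>G. rr \<alpha> = u}" using mul_G[OF c] r_mul[OF c] e aG by auto
  qed
  thus ?thesis using s XR_finite[OF Mf_fin[OF m] a] unfolding Mf_def by (auto intro: finite_subset)
qed

lemma Nf_zero: "(\<lambda>_. 0) \<in> Nf" by (simp add: Nf_def supp_def)
lemma Nf_add: "n \<in> Nf \<Longrightarrow> n' \<in> Nf \<Longrightarrow> (\<lambda>a. n a + n' a) \<in> Nf"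
  unfolding Nf_def using supp_add[of n n'] by (auto intro: finite_subset)
lemma Nf_diff: "n \<in> Nf \<Longrightarrow> n' \<in> Nf \<Longrightarrow> (\<lambda>a. n a - n' a) \<in> Nf"
  unfolding Nf_def using supp_diff[of n n'] by (auto intro: finite_subset)

lemma Nf_actL: assumes n: "n \<in> Nf" and a: "a \<in> steinberg_carrier T" shows "actL a n \<in> Nf"
proof -
  let ?Y = "rr ` (\<Union>w\<in>supp n. {\<gamma>. a \<gamma> \<noteq> 0 \<and> dd \<gamma> = w})"
  have fin: "finite ?Y" using n fiber_finite[OF a, of dd] unfolding Nf_def by auto
  have "supp (actL a n) \<subseteq> ?Y \<inter> Orb"
  proof
    fix v assume "v \<in> supp (actL a n)"
    hence "(\<Sum>\<gamma>\<in>Fr a v. a \<gamma> * n (dd \<gamma>)) \<noteq> 0" unfolding supp_def actL_def by simp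
    then obtain \<gamma> where g: "\<gamma> \<in> Fr a v" "a \<gamma> * n (dd \<gamma>) \<noteq> 0"
      by (rule sum.not_neutral_contains_not_neutral)
    hence gG: "\<gamma> \<in> G" "rr \<gamma> = v" "a \<gamma> \<noteq> 0" "dd \<gamma> \<in> supp n" unfolding Fr_def supp_def by auto
    hence "v \<in> ?Y" by blast
    moreover have "v \<in> Orb"
    proof -
      have "dd \<gamma> \<in> Orb" using gG n unfolding Nf_def by auto
      then obtain \<gamma>' where g': "dd \<gamma> = rr \<gamma>'" "\<gamma>' \<in> G" "dd \<gamma>' = u" unfolding Orb_def by auto
      have c: "(\<gamma>, \<gamma>') \<in> G2" using comp_iff gG g' by auto
      show ?thesis using mul_G[OF c] r_mul[OF c] d_mul[OF c] g' gG unfolding Orb_def by auto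
    qed
    ultimately show "v \<in> ?Y \<inter> Orb" by blast
  qed
  thus ?thesis using fin unfolding Nf_def by (auto intro: finite_subset)
qed

lemma L_supp: assumes m: "m \<in> Mf" shows "supp (L m) \<subseteq> gmul x ` supp m"
proof
  fix b assume "b \<in> supp (L m)"
  hence b: "b \<in> G" "rr b = u" "m (gmul (ginv x) b) \<noteq> 0" unfolding supp_def L_def by (auto split: if_splits)
  have "gmul x (gmul (ginv x) b) = b" using tr_mul x b by auto
  thus "b \<in> gmul x ` supp m" using b(3) by (intro image_eqI[of _ _ "gmul (ginv x) b"]) (auto simp: supp_def)
qed

lemma L_Mf: assumes m: "m \<in> Mf" shows "L m \<in> Mf"
proof -
  have "supp (L m) \<subseteq> {\<alpha>\<in>G. rr \<alpha> = u}" unfolding supp_def L_def by auto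
  thus ?thesis using L_supp[OF m] Mf_fin[OF m] unfolding Mf_def by (auto intro: finite_subset)
qed

lemma L_diff: "L (\<lambda>a. m a - m' a) = (\<lambda>b. L m b - L m' b)" by (auto simp: L_def fun_eq_iff)
lemma L_add: "L (\<lambda>a. m a + m' a) = (\<lambda>b. L m b + L m' b)" by (auto simp: L_def fun_eq_iff)

lemma comp_x: "\<alpha> \<in> G \<Longrightarrow> rr \<alpha> = u \<Longrightarrow> (x, \<alpha>) \<in> G2" using comp_iff x by auto

lemma L_actR: assumes m: "m \<in> Mf" and a: "a \<in> steinberg_carrier T"
  shows "L (actR m a) \<beta> = actR (L m) a \<beta>"
proof -
  have inj: "inj_on (gmul x) (supp m)"
  proof (rule inj_onI)
    fix p q assume "p \<in> supp m" "q \<in> supp m" "gmul x p = gmul x q"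
    assume pq: "p \<in> supp m" "q \<in> supp m" "gmul x p = gmul x q"
    have "p \<in> G" "rr p = u" "q \<in> G" "rr q = u" using pq(1,2) m unfolding Mf_def by auto
    hence "(x, p) \<in> G2" "(x, q) \<in> G2" using comp_x by auto
    hence "p = gmul (ginv x) (gmul x p)" "q = gmul (ginv x) (gmul x q)" using left_solve by auto
    thus "p = q" using pq(3) by simp
  qed
  have fin: "finite (gmul x ` supp m)" using Mf_fin[OF m] by auto
  have "actR (L m) a \<beta> = (\<Sum>\<alpha>'\<in>gmul x ` supp m. L m \<alpha>' * tr a \<alpha>' \<beta>)"
    by (rule actR_sup[OF fin L_supp[OF m]])
  also have "\<dots> = (\<Sum>\<alpha>\<in>supp m. L m (gmul x \<alpha>) * tr a (gmul x \<alpha>) \<beta>)"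
    by (subst sum.reindex[OF inj]) simp
  also have "\<dots> = (\<Sum>\<alpha>\<in>supp m. m \<alpha> * tr a (gmul x \<alpha>) \<beta>)"
  proof (rule sum.cong[OF refl])
    fix \<alpha> assume al: "\<alpha> \<in> supp m"
    hence aG: "\<alpha> \<in> G" "rr \<alpha> = u" using m unfolding Mf_def by auto
    have c: "(x, \<alpha>) \<in> G2" using comp_x aG by auto
    have "L m (gmul x \<alpha>) = m \<alpha>" using mul_G[OF c] r_mul[OF c] canc[OF c] x unfolding L_def by auto
    thus "L m (gmul x \<alpha>) * tr a (gmul x \<alpha>) \<beta> = m \<alpha> * tr a (gmul x \<alpha>) \<beta>" by simp
  qed
  also have "\<dots> = L (actR m a) \<beta>"
  proof (cases "\<beta> \<in> G \<and> rr \<beta> = u")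
    case True
    have q: "gmul (ginv x) \<beta> \<in> G" "rr (gmul (ginv x) \<beta>) = u" using tr_G tr_r x True by auto
    have "L (actR m a) \<beta> = (\<Sum>\<alpha>\<in>supp m. m \<alpha> * tr a \<alpha> (gmul (ginv x) \<beta>))"
      using True unfolding L_def actR_def by simp
    also have "\<dots> = (\<Sum>\<alpha>\<in>supp m. m \<alpha> * tr a (gmul x \<alpha>) \<beta>)"
    proof (rule sum.cong[OF refl])
      fix \<alpha> assume al: "\<alpha> \<in> supp m"
      hence aG: "\<alpha> \<in> G" "rr \<alpha> = u" using m unfolding Mf_def by auto
      have c: "(x, \<alpha>) \<in> G2" using comp_x aG by auto
      have "tr a (gmul x \<alpha>) \<beta> = a (gmul (ginv (gmul x \<alpha>)) \<beta>)" using True r_mul[OF c] x unfolding tr_def by simp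
      also have "\<dots> = a (gmul (ginv \<alpha>) (gmul (ginv x) \<beta>))" using inv_mul_tr[OF c] True x by simp
      also have "\<dots> = tr a \<alpha> (gmul (ginv x) \<beta>)" using q aG unfolding tr_def by simp
      finally show "m \<alpha> * tr a \<alpha> (gmul (ginv x) \<beta>) = m \<alpha> * tr a (gmul x \<alpha>) \<beta>" by simp
    qed
    finally show ?thesis by simp
  next
    case False
    have "tr a (gmul x \<alpha>) \<beta> = 0" if al: "\<alpha> \<in> supp m" for \<alpha>
    proof -
      have aG: "\<alpha> \<in> G" "rr \<alpha> = u" using al m unfolding Mf_def by auto
      have c: "(x, \<alpha>) \<in> G2" using comp_x aG by auto
      show ?thesis using False r_mul[OF c] x unfolding tr_def by auto
    qed
    hence "(\<Sum>\<alpha>\<in>supp m. m \<alpha> * tr a (gmul x \<alpha>) \<beta>) = 0" by simp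
    moreover have "L (actR m a) \<beta> = 0" using False unfolding L_def by auto
    ultimately show ?thesis by simp
  qed
  finally show ?thesis by simp
qed

end


context stp begin

lemma L_inj:
  fixes c :: "'g \<Rightarrow> 'c::{group_add,linorder}" and m :: "'g \<Rightarrow> 'r::field"
  assumes tog: "totally_ordered_group TYPE('c)" and grd: "grading T G2 gmul c" and cx: "c x \<noteq> 0"
    and m: "m \<in> Mf" and fx: "\<And>\<beta>. m \<beta> = L m \<beta>"
  shows "supp m = {}"
proof (rule ccontr)
  assume ne: "supp m \<noteq> {}"
  have fin: "finite (c ` supp m)" using Mf_fin[OF m] by auto
  have cm: "c (gmul x \<alpha>) = c x + c \<alpha>" if "\<alpha> \<in> supp m" for \<alpha>
  proof -
    have "\<alpha> \<in> G" "rr \<alpha> = u" using that m unfolding Mf_def by auto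
    hence "(x, \<alpha>) \<in> G2" using comp_x by auto
    thus ?thesis using grd unfolding grading_def by auto
  qed
  have shift: "gmul x \<alpha> \<in> supp m" if "\<alpha> \<in> supp m" for \<alpha>
  proof -
    have aG: "\<alpha> \<in> G" "rr \<alpha> = u" using that m unfolding Mf_def by auto
    hence c: "(x, \<alpha>) \<in> G2" using comp_x by auto
    have "m (gmul x \<alpha>) = L m (gmul x \<alpha>)" by (rule fx)
    also have "\<dots> = m \<alpha>" using mul_G[OF c] r_mul[OF c] canc[OF c] x unfolding L_def by auto
    finally show ?thesis using that unfolding supp_def by auto
  qed
  have mono: "\<And>a b z :: 'c. a \<le> b \<Longrightarrow> a + z \<le> b + z" using tog unfolding totally_ordered_group_def by blast
  show False
  proof (cases "0 < c x")
    case True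
    have "Max (c ` supp m) \<in> c ` supp m" using Max_in[OF fin] ne by simp
    then obtain \<alpha> where al: "\<alpha> \<in> supp m" "c \<alpha> = Max (c ` supp m)" by (auto simp del: Max_in)
    have "c (gmul x \<alpha>) \<le> c \<alpha>" using shift[OF al(1)] Max_ge[OF fin] al(2) by auto
    hence "c x + c \<alpha> \<le> 0 + c \<alpha>" using cm[OF al(1)] by simp
    moreover have "0 + c \<alpha> \<le> c x + c \<alpha>" using mono[of 0 "c x" "c \<alpha>"] True by simp
    ultimately have "c x + c \<alpha> = 0 + c \<alpha>" by simp
    hence "c x = 0" by (simp only: add_right_cancel)
    thus False using cx by simp
  next
    case False
    hence neg: "c x < 0" using cx by auto
    have "Min (c ` supp m) \<in> c ` supp m" using Min_in[OF fin] ne by simp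
    then obtain \<alpha> where al: "\<alpha> \<in> supp m" "c \<alpha> = Min (c ` supp m)" by (auto simp del: Min_in)
    have "c \<alpha> \<le> c (gmul x \<alpha>)" using shift[OF al(1)] Min_le[OF fin] al(2) by auto
    hence "0 + c \<alpha> \<le> c x + c \<alpha>" using cm[OF al(1)] by simp
    moreover have "c x + c \<alpha> \<le> 0 + c \<alpha>" using mono[of "c x" 0 "c \<alpha>"] neg by simp
    ultimately have "c x + c \<alpha> = 0 + c \<alpha>" by simp
    hence "c x = 0" by (simp only: add_right_cancel)
    thus False using cx by simp
  qed
qed

end


context stp begin

definition II :: "('g \<Rightarrow> 'r::field) set" where "II = {(\<lambda>\<beta>. m \<beta> - L m \<beta>) | m. m \<in> Mf}"

definition cosm :: "('g \<Rightarrow> 'r::field) \<Rightarrow> ('g \<Rightarrow> 'r) set" where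
  "cosm m = {m' \<in> Mf. (\<lambda>\<beta>. m' \<beta> - m \<beta>) \<in> II}"

lemma II_Mf: "i \<in> II \<Longrightarrow> i \<in> Mf" unfolding II_def using Mf_diff L_Mf by auto

lemma II_zero: "(\<lambda>_. 0::'r::field) \<in> II"
proof -
  have eq: "(\<lambda>_. 0::'r) = (\<lambda>\<beta>. (\<lambda>_. 0::'r) \<beta> - L (\<lambda>_. 0::'r) \<beta>)" by (simp add: L_def fun_eq_iff)
  show ?thesis unfolding II_def using Mf_zero eq by (intro CollectI exI[of _ "\<lambda>_. 0::'r"] conjI) simp_all
qed

lemma II_add: assumes "i \<in> II" "j \<in> II" shows "(\<lambda>\<beta>. i \<beta> + j \<beta>) \<in> II"
proof -
  obtain m where m: "m \<in> Mf" "i = (\<lambda>\<beta>. m \<beta> - L m \<beta>)" using assms unfolding II_def by auto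
  obtain m' where m': "m' \<in> Mf" "j = (\<lambda>\<beta>. m' \<beta> - L m' \<beta>)" using assms unfolding II_def by auto
  have eq: "(\<lambda>\<beta>. i \<beta> + j \<beta>) = (\<lambda>\<beta>. (\<lambda>a. m a + m' a) \<beta> - L (\<lambda>a. m a + m' a) \<beta>)"
    unfolding m m' L_add by (simp add: fun_eq_iff algebra_simps)
  show ?thesis unfolding II_def using Mf_add[OF m(1) m'(1)] eq
    by (intro CollectI exI[of _ "\<lambda>a. m a + m' a"] conjI) assumption+
qed

lemma II_diff: assumes "i \<in> II" "j \<in> II" shows "(\<lambda>\<beta>. i \<beta> - j \<beta>) \<in> II"
proof -
  obtain m where m: "m \<in> Mf" "i = (\<lambda>\<beta>. m \<beta> - L m \<beta>)" using assms unfolding II_def by auto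
  obtain m' where m': "m' \<in> Mf" "j = (\<lambda>\<beta>. m' \<beta> - L m' \<beta>)" using assms unfolding II_def by auto
  have eq: "(\<lambda>\<beta>. i \<beta> - j \<beta>) = (\<lambda>\<beta>. (\<lambda>a. m a - m' a) \<beta> - L (\<lambda>a. m a - m' a) \<beta>)"
    unfolding m m' L_diff by (simp add: fun_eq_iff algebra_simps)
  show ?thesis unfolding II_def using Mf_diff[OF m(1) m'(1)] eq
    by (intro CollectI exI[of _ "\<lambda>a. m a - m' a"] conjI) assumption+
qed

lemma II_actR: assumes i: "i \<in> II" and a: "a \<in> steinberg_carrier T" shows "actR i a \<in> II"
proof -
  obtain m where m: "m \<in> Mf" "i = (\<lambda>\<beta>. m \<beta> - L m \<beta>)" using assms unfolding II_def by auto
  have eq: "actR i a = (\<lambda>\<beta>. actR m a \<beta> - L (actR m a) \<beta>)"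
    unfolding m(2) using actR_diff1[OF Mf_fin[OF m(1)] Mf_fin[OF L_Mf[OF m(1)]]] L_actR[OF m(1) a]
    by (simp add: fun_eq_iff)
  show ?thesis unfolding II_def using Mf_actR[OF m(1) a] eq
    by (intro CollectI exI[of _ "actR m a"] conjI) assumption+
qed

lemma II_cong: "i \<in> II \<Longrightarrow> i = j \<Longrightarrow> j \<in> II" by simp

lemma cosm_mem: "m \<in> Mf \<Longrightarrow> m \<in> cosm m" unfolding cosm_def using II_zero by simp

lemma cosm_eq: assumes "m \<in> Mf" "m' \<in> Mf"
  shows "cosm m = cosm m' \<longleftrightarrow> (\<lambda>\<beta>. m \<beta> - m' \<beta>) \<in> II"
proof
  assume "cosm m = cosm m'"
  thus "(\<lambda>\<beta>. m \<beta> - m' \<beta>) \<in> II" using cosm_mem[OF assms(1)] unfolding cosm_def by blast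
next
  assume h: "(\<lambda>\<beta>. m \<beta> - m' \<beta>) \<in> II"
  show "cosm m = cosm m'"
  proof (rule set_eqI)
    fix k
    have e1: "(\<lambda>\<beta>. k \<beta> - m' \<beta>) = (\<lambda>\<beta>. (\<lambda>\<beta>. k \<beta> - m \<beta>) \<beta> + (\<lambda>\<beta>. m \<beta> - m' \<beta>) \<beta>)" by (simp add: fun_eq_iff)
    have e2: "(\<lambda>\<beta>. k \<beta> - m \<beta>) = (\<lambda>\<beta>. (\<lambda>\<beta>. k \<beta> - m' \<beta>) \<beta> - (\<lambda>\<beta>. m \<beta> - m' \<beta>) \<beta>)" by (simp add: fun_eq_iff)
    have "(\<lambda>\<beta>. k \<beta> - m' \<beta>) \<in> II" if 0: "(\<lambda>\<beta>. k \<beta> - m \<beta>) \<in> II"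
      by (rule II_cong[OF II_add[OF 0 h]]) (simp add: fun_eq_iff)
    moreover have "(\<lambda>\<beta>. k \<beta> - m \<beta>) \<in> II" if 0: "(\<lambda>\<beta>. k \<beta> - m' \<beta>) \<in> II"
      by (rule II_cong[OF II_diff[OF 0 h]]) (simp add: fun_eq_iff)
    ultimately show "k \<in> cosm m \<longleftrightarrow> k \<in> cosm m'" unfolding cosm_def by blast
  qed
qed

definition add3 :: "('g \<Rightarrow> 'r::field) set \<Rightarrow> ('g \<Rightarrow> 'r) set \<Rightarrow> ('g \<Rightarrow> 'r) set" where
  "add3 X Y = {k \<in> Mf. \<exists>m1\<in>X. \<exists>m2\<in>Y. (\<lambda>\<beta>. k \<beta> - (m1 \<beta> + m2 \<beta>)) \<in> II}"

definition act3 :: "('g \<Rightarrow> 'r::field) set \<Rightarrow> ('g \<Rightarrow> 'r) \<Rightarrow> ('g \<Rightarrow> 'r) set" where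
  "act3 X a = {k \<in> Mf. \<exists>m\<in>X. (\<lambda>\<beta>. k \<beta> - actR m a \<beta>) \<in> II}"

lemma add3_cosm: assumes a: "a \<in> Mf" and b: "b \<in> Mf"
  shows "add3 (cosm a) (cosm b) = cosm (\<lambda>\<beta>. a \<beta> + b \<beta>)"
proof (rule set_eqI)
  fix k
  show "k \<in> add3 (cosm a) (cosm b) \<longleftrightarrow> k \<in> cosm (\<lambda>\<beta>. a \<beta> + b \<beta>)"
  proof
    assume "k \<in> add3 (cosm a) (cosm b)"
    then obtain m1 m2 where k: "k \<in> Mf" "m1 \<in> cosm a" "m2 \<in> cosm b" "(\<lambda>\<beta>. k \<beta> - (m1 \<beta> + m2 \<beta>)) \<in> II"
      unfolding add3_def by auto
    have 1: "(\<lambda>\<beta>. m1 \<beta> - a \<beta>) \<in> II" "(\<lambda>\<beta>. m2 \<beta> - b \<beta>) \<in> II" using k unfolding cosm_def by auto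
    have "(\<lambda>\<beta>. k \<beta> - (a \<beta> + b \<beta>)) = (\<lambda>\<beta>. (\<lambda>\<beta>. k \<beta> - (m1 \<beta> + m2 \<beta>)) \<beta> +
         (\<lambda>\<beta>. (\<lambda>\<beta>. m1 \<beta> - a \<beta>) \<beta> + (\<lambda>\<beta>. m2 \<beta> - b \<beta>) \<beta>) \<beta>)" by (simp add: fun_eq_iff algebra_simps)
    hence "(\<lambda>\<beta>. k \<beta> - (a \<beta> + b \<beta>)) \<in> II" using II_add[OF k(4) II_add[OF 1]] by simp
    thus "k \<in> cosm (\<lambda>\<beta>. a \<beta> + b \<beta>)" using k(1) unfolding cosm_def by simp
  next
    assume "k \<in> cosm (\<lambda>\<beta>. a \<beta> + b \<beta>)"
    thus "k \<in> add3 (cosm a) (cosm b)" unfolding add3_def using cosm_mem a b unfolding cosm_def by blast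
  qed
qed

lemma act3_cosm_gen: assumes m: "m \<in> Mf" and ic: "\<And>i. i \<in> II \<Longrightarrow> actR i a \<in> II"
  shows "act3 (cosm m) a = cosm (actR m a)"
proof (rule set_eqI)
  fix k
  show "k \<in> act3 (cosm m) a \<longleftrightarrow> k \<in> cosm (actR m a)"
  proof
    assume "k \<in> act3 (cosm m) a"
    then obtain m1 where k: "k \<in> Mf" "m1 \<in> cosm m" "(\<lambda>\<beta>. k \<beta> - actR m1 a \<beta>) \<in> II"
      unfolding act3_def by auto
    have 1: "(\<lambda>\<beta>. m1 \<beta> - m \<beta>) \<in> II" "m1 \<in> Mf" using k unfolding cosm_def by auto
    have "actR (\<lambda>\<beta>. m1 \<beta> - m \<beta>) a = (\<lambda>\<beta>. actR m1 a \<beta> - actR m a \<beta>)"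
      using actR_diff1[OF Mf_fin[OF 1(2)] Mf_fin[OF m]] by (simp add: fun_eq_iff)
    hence 2: "(\<lambda>\<beta>. actR m1 a \<beta> - actR m a \<beta>) \<in> II" using ic[OF 1(1)] by simp
    have "(\<lambda>\<beta>. k \<beta> - actR m a \<beta>) = (\<lambda>\<beta>. (\<lambda>\<beta>. k \<beta> - actR m1 a \<beta>) \<beta> + (\<lambda>\<beta>. actR m1 a \<beta> - actR m a \<beta>) \<beta>)"
      by (simp add: fun_eq_iff)
    hence "(\<lambda>\<beta>. k \<beta> - actR m a \<beta>) \<in> II" using II_add[OF k(3) 2] by simp
    thus "k \<in> cosm (actR m a)" using k(1) unfolding cosm_def by simp
  next
    assume "k \<in> cosm (actR m a)"
    thus "k \<in> act3 (cosm m) a" unfolding act3_def using cosm_mem m unfolding cosm_def by blast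
  qed
qed

lemma act3_cosm: assumes m: "m \<in> Mf" and a: "a \<in> steinberg_carrier T"
  shows "act3 (cosm m) a = cosm (actR m a)"
  using act3_cosm_gen[OF m] II_actR[OF _ a] by blast

lemma II_actR_conv: assumes i: "i \<in> II" and a: "a \<in> steinberg_carrier T" and b: "b \<in> steinberg_carrier T"
  shows "actR i (convolution T G2 gmul a b) \<in> II"
proof -
  have "actR i (convolution T G2 gmul a b) = actR (actR i a) b"
    using actR_assoc[OF Mf_fin[OF II_Mf[OF i]] Mf_G[OF II_Mf[OF i]] a b] by (simp add: fun_eq_iff)
  thus ?thesis using II_actR[OF II_actR[OF i a] b] by simp
qed

lemma act3_cosm_conv: assumes m: "m \<in> Mf" and a: "a \<in> steinberg_carrier T" and b: "b \<in> steinberg_carrier T"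
  shows "act3 (cosm m) (convolution T G2 gmul a b) = cosm (actR m (convolution T G2 gmul a b))"
  using act3_cosm_gen[OF m] II_actR_conv[OF _ a b] by blast

end


context agpd begin

lemma unit_inv: "unit v \<Longrightarrow> ginv v = v"
proof -
  assume v: "unit v"
  hence vG: "v \<in> G" and d: "gmul (ginv v) v = v" unfolding unit_def gdom_def by auto
  have "(ginv v, v) \<in> G2" using comp_inv vG by auto
  hence "gmul (ginv v) v = ginv v" using unit_mul_right[OF v] by auto
  thus ?thesis using d by simp
qed

lemma actR_unit:
  assumes W: "\<forall>y\<in>W. unit y" and sm: "supp m \<subseteq> G" and dW: "dd ` supp m \<subseteq> W" and fin: "finite (supp m)"
  shows "actR m (ind W 1) \<beta> = m \<beta>"
proof -
  have t: "m \<alpha> * tr (ind W 1) \<alpha> \<beta> = (if \<alpha> = \<beta> then m \<beta> else 0)" if al: "\<alpha> \<in> supp m" for \<alpha>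
  proof -
    have aG: "\<alpha> \<in> G" using al sm by auto
    show ?thesis
    proof (cases "\<beta> \<in> G \<and> rr \<beta> = rr \<alpha> \<and> gmul (ginv \<alpha>) \<beta> \<in> W")
      case True
      hence un: "unit (gmul (ginv \<alpha>) \<beta>)" using W by auto
      have c: "(\<alpha>, gmul (ginv \<alpha>) \<beta>) \<in> G2" using comp_iff aG True tr_G tr_r by auto
      have "\<beta> = gmul \<alpha> (gmul (ginv \<alpha>) \<beta>)" using tr_mul aG True by auto
      also have "\<dots> = \<alpha>" using unit_mul_right[OF un c] .
      finally show ?thesis using True unfolding tr_def ind_def by simp
    next
      case False
      have "\<alpha> \<noteq> \<beta>"
      proof
        assume e: "\<alpha> = \<beta>"
        have "gmul (ginv \<alpha>) \<alpha> \<in> W" using dW al by (auto simp: gdom_def)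
        thus False using False e aG by auto
      qed
      thus ?thesis using False unfolding tr_def ind_def by auto
    qed
  qed
  have "actR m (ind W 1) \<beta> = (\<Sum>\<alpha>\<in>supp m. if \<alpha> = \<beta> then m \<beta> else 0)"
    unfolding actR_def by (rule sum.cong[OF refl]) (rule t)
  also have "\<dots> = (if \<beta> \<in> supp m then m \<beta> else 0)" by (rule sum.delta[OF fin])
  also have "\<dots> = m \<beta>" by (simp add: supp_def)
  finally show ?thesis .
qed

lemma actL_ind_units:
  assumes W: "\<forall>y\<in>W. unit y"
  shows "actL (ind W c) n v = (if v \<in> W then c * n v else 0)"
proof (cases "c = 0")
  case True thus ?thesis unfolding actL_def Fr_def ind_def by simp
next
  case False
  have "Fr (ind W c) v = (if v \<in> W then {v} else {})"
    using W False unit_r unfolding Fr_def ind_def unit_def by auto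
  moreover have "v \<in> W \<Longrightarrow> dd v = v" using W unit_def by auto
  ultimately show ?thesis unfolding actL_def by (auto simp: ind_def)
qed

lemma actL_ind_bisec:
  assumes B: "inj_on dd B" "B \<subseteq> G" and g0: "\<gamma>0 \<in> B" "dd \<gamma>0 = w" and Bc: "ind B c \<in> steinberg_carrier T"
  shows "actL (ind B c) (\<lambda>v'. if v' = w then k else 0) v = (if v = rr \<gamma>0 then c * k else 0)"
proof (cases "c = 0")
  case True thus ?thesis unfolding actL_def Fr_def ind_def by simp
next
  case False
  have "actL (ind B c) (\<lambda>v'. if v' = w then k else 0) v = (\<Sum>\<gamma>\<in>Fr (ind B c) v. if dd \<gamma> = w then c * k else 0)"
    unfolding actL_def by (rule sum.cong[OF refl]) (auto simp: Fr_def ind_def)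
  also have "\<dots> = (\<Sum>\<gamma>\<in>{\<gamma> \<in> Fr (ind B c) v. dd \<gamma> = w}. c * k)"
    by (rule sum.inter_filter[symmetric]) (rule Fr_finite[OF Bc])
  also have "{\<gamma> \<in> Fr (ind B c) v. dd \<gamma> = w} = (if v = rr \<gamma>0 then {\<gamma>0} else {})"
    using B g0 False unfolding Fr_def ind_def inj_on_def by auto
  finally show ?thesis by simp
qed

end

context stp begin

definition "du = (\<lambda>v. if v = u then 1 else 0 :: 'r::field)"
definition "dx = (\<lambda>v. if v = x then 1 else 0 :: 'r::field)"

lemma du_Mf: "du \<in> Mf" unfolding Mf_def du_def supp_def using uG unit_r[OF u] by auto
lemma supp_du: "supp du = {u}" unfolding du_def supp_def by auto
lemma du_Nf: "du \<in> Nf"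
proof -
  have "u \<in> Orb" unfolding Orb_def using uG unit_r[OF u] u unit_def by force
  thus ?thesis unfolding Nf_def du_def supp_def by auto
qed

lemma actR_du: "actR du a \<beta> = (if \<beta> \<in> G \<and> rr \<beta> = u then a \<beta> else 0)"
proof -
  have "actR du a \<beta> = tr a u \<beta>" unfolding actR_def supp_du by (simp add: du_def)
  also have "\<dots> = (if \<beta> \<in> G \<and> rr \<beta> = u then a \<beta> else 0)"
  proof (cases "\<beta> \<in> G \<and> rr \<beta> = u")
    case True
    have "(u, \<beta>) \<in> G2" using True comp_iff uG u unit_def by auto
    hence "gmul u \<beta> = \<beta>" using unit_mul_left[OF u] by auto
    thus ?thesis using True unit_r[OF u] unit_inv[OF u] unfolding tr_def by simp
  next
    case False thus ?thesis using unit_r[OF u] unfolding tr_def by auto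
  qed
  finally show ?thesis .
qed

lemma L_du: "L du = dx"
proof
  fix \<beta>
  show "L du \<beta> = dx \<beta>"
  proof (cases "\<beta> \<in> G \<and> rr \<beta> = u")
    case True
    have "gmul (ginv x) \<beta> = u \<longleftrightarrow> \<beta> = x"
    proof
      assume "gmul (ginv x) \<beta> = u"
      hence "gmul x u = \<beta>" using tr_mul x True by metis
      moreover have "gmul x u = x" using mul_d x by metis
      ultimately show "\<beta> = x" by simp
    next
      assume "\<beta> = x" thus "gmul (ginv x) \<beta> = u" using x by (simp add: gdom_def)
    qed
    thus ?thesis using True unfolding L_def du_def dx_def by simp
  next
    case False thus ?thesis using x unfolding L_def dx_def by auto
  qed
qed

end


context stp begin

definition MM :: "(('g \<Rightarrow> 'r::field) set, 'g \<Rightarrow> 'r) rmodule" where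
  "MM = \<lparr>gcarr = (\<lambda>m. {m}) ` Mf, gadd = (\<lambda>X Y. {\<lambda>\<beta>. the_elem X \<beta> + the_elem Y \<beta>}),
         gzero = {\<lambda>_. 0}, ract = (\<lambda>X a. {actR (the_elem X) a})\<rparr>"

definition M3 :: "(('g \<Rightarrow> 'r::field) set, 'g \<Rightarrow> 'r) rmodule" where
  "M3 = \<lparr>gcarr = cosm ` Mf, gadd = add3, gzero = cosm (\<lambda>_. 0), ract = act3\<rparr>"

definition NN :: "(('g \<Rightarrow> 'r::field) set, 'g \<Rightarrow> 'r) lmodule" where
  "NN = \<lparr>gcarr = (\<lambda>n. {n}) ` Nf, gadd = (\<lambda>X Y. {\<lambda>\<beta>. the_elem X \<beta> + the_elem Y \<beta>}),
         gzero = {\<lambda>_. 0}, lact = (\<lambda>a X. {actL a (the_elem X)})\<rparr>"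

abbreviation "AA \<equiv> steinberg_algebra T G2 gmul"

lemma AA_simps: "rcarr AA = steinberg_carrier T" "radd AA = (\<lambda>f g x. f x + g x)"
  "rmul AA = convolution T G2 gmul" by (simp_all add: steinberg_algebra_def)

lemma MM_simps: "gcarr MM = (\<lambda>m. {m}) ` Mf" "gadd MM X Y = {\<lambda>\<beta>. the_elem X \<beta> + the_elem Y \<beta>}"
  "gzero MM = {\<lambda>_. 0}" "ract MM X a = {actR (the_elem X) a}" by (simp_all add: MM_def)

lemma M3_simps: "gcarr M3 = cosm ` Mf" "gadd M3 = add3" "gzero M3 = cosm (\<lambda>_. 0)" "ract M3 = act3"
  by (simp_all add: M3_def)

lemma NN_simps: "gcarr NN = (\<lambda>n. {n}) ` Nf" "gadd NN X Y = {\<lambda>\<beta>. the_elem X \<beta> + the_elem Y \<beta>}"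
  "gzero NN = {\<lambda>_. 0}" "lact NN a X = {actL a (the_elem X)}" by (simp_all add: NN_def)

lemma abgroup_MM: "abgroup (MM :: (('g \<Rightarrow> 'r::field) set, 'g \<Rightarrow> 'r) rmodule)"
  unfolding abgroup_def MM_simps
proof (intro conjI ballI)
  show "{\<lambda>_. 0::'r} \<in> (\<lambda>m. {m}) ` Mf" using Mf_zero by auto
next
  fix X Y :: "('g \<Rightarrow> 'r) set" assume "X \<in> (\<lambda>m. {m}) ` Mf" "Y \<in> (\<lambda>m. {m}) ` Mf"
  then obtain m m' where "X = {m}" "Y = {m'}" "m \<in> Mf" "m' \<in> Mf" by auto
  thus "{\<lambda>\<beta>. the_elem X \<beta> + the_elem Y \<beta>} \<in> (\<lambda>m. {m}) ` Mf" using Mf_add[of m m'] by auto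
next
  fix X Y Z :: "('g \<Rightarrow> 'r) set" assume "X \<in> (\<lambda>m. {m}) ` Mf" "Y \<in> (\<lambda>m. {m}) ` Mf" "Z \<in> (\<lambda>m. {m}) ` Mf"
  show "{\<lambda>\<beta>. the_elem {\<lambda>\<beta>. the_elem X \<beta> + the_elem Y \<beta>} \<beta> + the_elem Z \<beta>} =
       {\<lambda>\<beta>. the_elem X \<beta> + the_elem {\<lambda>\<beta>. the_elem Y \<beta> + the_elem Z \<beta>} \<beta>}" by (simp add: add.assoc)
next
  fix X Y :: "('g \<Rightarrow> 'r) set"
  show "{\<lambda>\<beta>. the_elem X \<beta> + the_elem Y \<beta>} = {\<lambda>\<beta>. the_elem Y \<beta> + the_elem X \<beta>}" by (simp add: add.commute)
next
  fix X :: "('g \<Rightarrow> 'r) set" assume "X \<in> (\<lambda>m. {m}) ` Mf"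
  thus "{\<lambda>\<beta>. the_elem {\<lambda>_. 0} \<beta> + the_elem X \<beta>} = X" by auto
next
  fix X :: "('g \<Rightarrow> 'r) set" assume "X \<in> (\<lambda>m. {m}) ` Mf"
  then obtain m where m: "X = {m}" "m \<in> Mf" by auto
  have "(\<lambda>\<beta>. (\<lambda>_. 0) \<beta> - m \<beta>) \<in> Mf" by (rule Mf_diff[OF Mf_zero m(2)])
  hence "{\<lambda>\<beta>. - m \<beta>} \<in> (\<lambda>m. {m}) ` Mf" by simp
  moreover have "{\<lambda>\<beta>. the_elem X \<beta> + the_elem {\<lambda>\<beta>. - m \<beta>} \<beta>} = {\<lambda>_. 0}" using m by simp
  ultimately show "\<exists>Y\<in>(\<lambda>m. {m}) ` Mf. {\<lambda>\<beta>. the_elem X \<beta> + the_elem Y \<beta>} = {\<lambda>_. 0}" by blast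
qed

lemma abgroup_NN: "abgroup (NN :: (('g \<Rightarrow> 'r::field) set, 'g \<Rightarrow> 'r) lmodule)"
  unfolding abgroup_def NN_simps
proof (intro conjI ballI)
  show "{\<lambda>_. 0::'r} \<in> (\<lambda>m. {m}) ` Nf" using Nf_zero by auto
next
  fix X Y :: "('g \<Rightarrow> 'r) set" assume "X \<in> (\<lambda>m. {m}) ` Nf" "Y \<in> (\<lambda>m. {m}) ` Nf"
  then obtain m m' where "X = {m}" "Y = {m'}" "m \<in> Nf" "m' \<in> Nf" by auto
  thus "{\<lambda>\<beta>. the_elem X \<beta> + the_elem Y \<beta>} \<in> (\<lambda>m. {m}) ` Nf" using Nf_add[of m m'] by auto
next
  fix X Y Z :: "('g \<Rightarrow> 'r) set"
  show "{\<lambda>\<beta>. the_elem {\<lambda>\<beta>. the_elem X \<beta> + the_elem Y \<beta>} \<beta> + the_elem Z \<beta>} =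
       {\<lambda>\<beta>. the_elem X \<beta> + the_elem {\<lambda>\<beta>. the_elem Y \<beta> + the_elem Z \<beta>} \<beta>}" by (simp add: add.assoc)
next
  fix X Y :: "('g \<Rightarrow> 'r) set"
  show "{\<lambda>\<beta>. the_elem X \<beta> + the_elem Y \<beta>} = {\<lambda>\<beta>. the_elem Y \<beta> + the_elem X \<beta>}" by (simp add: add.commute)
next
  fix X :: "('g \<Rightarrow> 'r) set" assume "X \<in> (\<lambda>m. {m}) ` Nf"
  thus "{\<lambda>\<beta>. the_elem {\<lambda>_. 0} \<beta> + the_elem X \<beta>} = X" by auto
next
  fix X :: "('g \<Rightarrow> 'r) set" assume "X \<in> (\<lambda>m. {m}) ` Nf"
  then obtain m where m: "X = {m}" "m \<in> Nf" by auto
  have "(\<lambda>\<beta>. (\<lambda>_. 0) \<beta> - m \<beta>) \<in> Nf" by (rule Nf_diff[OF Nf_zero m(2)])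
  hence "{\<lambda>\<beta>. - m \<beta>} \<in> (\<lambda>m. {m}) ` Nf" by simp
  moreover have "{\<lambda>\<beta>. the_elem X \<beta> + the_elem {\<lambda>\<beta>. - m \<beta>} \<beta>} = {\<lambda>_. 0}" using m by simp
  ultimately show "\<exists>Y\<in>(\<lambda>m. {m}) ` Nf. {\<lambda>\<beta>. the_elem X \<beta> + the_elem Y \<beta>} = {\<lambda>_. 0}" by blast
qed

end


context stp begin

lemma rmod_MM: "right_module AA (MM :: (('g \<Rightarrow> 'r::field) set, 'g \<Rightarrow> 'r) rmodule)"
  unfolding right_module_def AA_simps MM_simps
proof (intro conjI ballI abgroup_MM)
  fix a :: "'g \<Rightarrow> 'r" and X :: "('g \<Rightarrow> 'r) set" assume a: "a \<in> steinberg_carrier T" and X: "X \<in> (\<lambda>m. {m}) ` Mf"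
  then obtain m where "X = {m}" "m \<in> Mf" by auto
  thus "{actR (the_elem X) a} \<in> (\<lambda>m. {m}) ` Mf" using Mf_actR a by auto
next
  fix a b :: "'g \<Rightarrow> 'r" and X :: "('g \<Rightarrow> 'r) set" assume "X \<in> (\<lambda>m. {m}) ` Mf"
  show "{actR (the_elem X) (\<lambda>x. a x + b x)} = {\<lambda>\<beta>. the_elem {actR (the_elem X) a} \<beta> + the_elem {actR (the_elem X) b} \<beta>}"
  proof -
    have "actR (the_elem X) (\<lambda>x. a x + b x) = (\<lambda>\<beta>. actR (the_elem X) a \<beta> + actR (the_elem X) b \<beta>)"
      by (rule ext, rule actR_add2)
    thus ?thesis by simp
  qed
next
  fix a :: "'g \<Rightarrow> 'r" and X Y :: "('g \<Rightarrow> 'r) set" assume "X \<in> (\<lambda>m. {m}) ` Mf" "Y \<in> (\<lambda>m. {m}) ` Mf"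
  then obtain m m' where mm: "X = {m}" "Y = {m'}" "m \<in> Mf" "m' \<in> Mf" by auto
  show "{actR (the_elem {\<lambda>\<beta>. the_elem X \<beta> + the_elem Y \<beta>}) a} =
        {\<lambda>\<beta>. the_elem {actR (the_elem X) a} \<beta> + the_elem {actR (the_elem Y) a} \<beta>}"
    using actR_add1[OF Mf_fin[OF mm(3)] Mf_fin[OF mm(4)]] mm(1,2) by (simp add: fun_eq_iff)
next
  fix a b :: "'g \<Rightarrow> 'r" and X :: "('g \<Rightarrow> 'r) set" assume a: "a \<in> steinberg_carrier T" and b: "b \<in> steinberg_carrier T"
    and X: "X \<in> (\<lambda>m. {m}) ` Mf"
  then obtain m where mm: "X = {m}" "m \<in> Mf" by auto
  show "{actR (the_elem X) (convolution T G2 gmul a b)} = {actR (the_elem {actR (the_elem X) a}) b}"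
    using actR_assoc[OF Mf_fin[OF mm(2)] Mf_G[OF mm(2)] a b] mm(1) by (simp add: fun_eq_iff)
qed

lemma Mf_unit: assumes m: "m \<in> Mf"
  shows "\<exists>W. ind W (1::'r::field) \<in> steinberg_carrier T \<and> actR m (ind W (1::'r)) = m"
proof -
  have "finite (dd ` supp m)" using Mf_fin[OF m] by auto
  moreover have "\<forall>v\<in>dd ` supp m. unit v" using Mf_G[OF m] unit_dd by auto
  ultimately obtain W where W: "compactin T W" "openin T W" "dd ` supp m \<subseteq> W" "\<forall>y\<in>W. unit y"
    using units_co by meson
  have "actR m (ind W 1) = m" using actR_unit[OF W(4) Mf_G[OF m] W(3) Mf_fin[OF m]] by (simp add: fun_eq_iff)
  thus ?thesis using ind_carrier[OF W(1,2)] by blast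
qed

lemma urmod_MM: "unital_right_module AA (MM :: (('g \<Rightarrow> 'r::field) set, 'g \<Rightarrow> 'r) rmodule)"
  unfolding unital_right_module_def
proof (intro conjI ballI rmod_MM)
  fix X :: "('g \<Rightarrow> 'r) set" assume "X \<in> gcarr MM"
  then obtain m where mm: "X = {m}" "m \<in> Mf" by (auto simp: MM_simps)
  obtain W where W: "ind W (1::'r) \<in> steinberg_carrier T" "actR m (ind W (1::'r)) = m" using Mf_unit[OF mm(2)] by blast
  show "\<exists>ps. set ps \<subseteq> gcarr MM \<times> rcarr AA \<and> X = foldr (\<lambda>(m', a). gadd MM (ract MM m' a)) ps (gzero MM)"
    using mm W by (intro exI[of _ "[(X, ind W 1)]"]) (auto simp: MM_simps AA_simps)
qed

lemma abgroup_M3: "abgroup (M3 :: (('g \<Rightarrow> 'r::field) set, 'g \<Rightarrow> 'r) rmodule)"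
  unfolding abgroup_def M3_simps
proof (intro conjI ballI)
  show "cosm (\<lambda>_. 0::'r) \<in> cosm ` Mf" using Mf_zero by auto
next
  fix X Y :: "('g \<Rightarrow> 'r) set" assume "X \<in> cosm ` Mf" "Y \<in> cosm ` Mf"
  then obtain m m' where mm: "X = cosm m" "Y = cosm m'" "m \<in> Mf" "m' \<in> Mf" by auto
  have "add3 X Y = cosm (\<lambda>\<beta>. m \<beta> + m' \<beta>)" using add3_cosm[OF mm(3,4)] mm(1,2) by simp
  thus "add3 X Y \<in> cosm ` Mf" using Mf_add[OF mm(3,4)] by simp
next
  fix X Y Z :: "('g \<Rightarrow> 'r) set" assume "X \<in> cosm ` Mf" "Y \<in> cosm ` Mf" "Z \<in> cosm ` Mf"
  then obtain m m' m'' where mm: "X = cosm m" "Y = cosm m'" "Z = cosm m''" "m \<in> Mf" "m' \<in> Mf" "m'' \<in> Mf" by auto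
  have 1: "add3 (add3 X Y) Z = cosm (\<lambda>\<beta>. (m \<beta> + m' \<beta>) + m'' \<beta>)"
    using add3_cosm[OF mm(4,5)] add3_cosm[OF Mf_add[OF mm(4,5)] mm(6)] mm(1-3) by simp
  have 2: "add3 X (add3 Y Z) = cosm (\<lambda>\<beta>. m \<beta> + (m' \<beta> + m'' \<beta>))"
    using add3_cosm[OF mm(5,6)] add3_cosm[OF mm(4) Mf_add[OF mm(5,6)]] mm(1-3) by simp
  show "add3 (add3 X Y) Z = add3 X (add3 Y Z)" unfolding 1 2 by (simp add: add.assoc)
next
  fix X Y :: "('g \<Rightarrow> 'r) set" assume "X \<in> cosm ` Mf" "Y \<in> cosm ` Mf"
  then obtain m m' where mm: "X = cosm m" "Y = cosm m'" "m \<in> Mf" "m' \<in> Mf" by auto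
  show "add3 X Y = add3 Y X" unfolding mm(1,2) add3_cosm[OF mm(3,4)] add3_cosm[OF mm(4,3)] by (simp add: add.commute)
next
  fix X :: "('g \<Rightarrow> 'r) set" assume "X \<in> cosm ` Mf"
  then obtain m where mm: "X = cosm m" "m \<in> Mf" by auto
  thus "add3 (cosm (\<lambda>_. 0)) X = X" using add3_cosm[OF Mf_zero mm(2)] by simp
next
  fix X :: "('g \<Rightarrow> 'r) set" assume "X \<in> cosm ` Mf"
  then obtain m where mm: "X = cosm m" "m \<in> Mf" by auto
  have n: "(\<lambda>\<beta>. (\<lambda>_. 0) \<beta> - m \<beta>) \<in> Mf" by (rule Mf_diff[OF Mf_zero mm(2)])
  have "add3 X (cosm (\<lambda>\<beta>. - m \<beta>)) = cosm (\<lambda>_. 0)" using add3_cosm[OF mm(2)] n mm(1) by simp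
  moreover have "cosm (\<lambda>\<beta>. - m \<beta>) \<in> cosm ` Mf" using n by simp
  ultimately show "\<exists>Y\<in>cosm ` Mf. add3 X Y = cosm (\<lambda>_. 0)" by blast
qed

lemma rmod_M3: "right_module AA (M3 :: (('g \<Rightarrow> 'r::field) set, 'g \<Rightarrow> 'r) rmodule)"
  unfolding right_module_def AA_simps M3_simps
proof (intro conjI ballI abgroup_M3)
  fix a :: "'g \<Rightarrow> 'r" and X :: "('g \<Rightarrow> 'r) set" assume a: "a \<in> steinberg_carrier T" and X: "X \<in> cosm ` Mf"
  then obtain m where "X = cosm m" "m \<in> Mf" by auto
  thus "act3 X a \<in> cosm ` Mf" using Mf_actR[of m a] a act3_cosm[of m a] by simp
next
  fix a b :: "'g \<Rightarrow> 'r" and X :: "('g \<Rightarrow> 'r) set" assume a: "a \<in> steinberg_carrier T" and b: "b \<in> steinberg_carrier T"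
    and "X \<in> cosm ` Mf"
  then obtain m where mm: "X = cosm m" "m \<in> Mf" by auto
  have ab: "(\<lambda>x. a x + b x) \<in> steinberg_carrier T" using carrier_add[OF a b] .
  have e: "actR m (\<lambda>x. a x + b x) = (\<lambda>\<beta>. actR m a \<beta> + actR m b \<beta>)" by (rule ext, rule actR_add2)
  show "act3 X (\<lambda>x. a x + b x) = add3 (act3 X a) (act3 X b)"
    unfolding mm(1) act3_cosm[OF mm(2) a] act3_cosm[OF mm(2) b] add3_cosm[OF Mf_actR[OF mm(2) a] Mf_actR[OF mm(2) b]]
      act3_cosm[OF mm(2) ab] e ..
next
  fix a :: "'g \<Rightarrow> 'r" and X Y :: "('g \<Rightarrow> 'r) set" assume a: "a \<in> steinberg_carrier T" and "X \<in> cosm ` Mf" "Y \<in> cosm ` Mf"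
  then obtain m m' where mm: "X = cosm m" "Y = cosm m'" "m \<in> Mf" "m' \<in> Mf" by auto
  have "act3 (add3 X Y) a = cosm (actR (\<lambda>\<beta>. m \<beta> + m' \<beta>) a)"
    unfolding mm(1,2) add3_cosm[OF mm(3,4)] act3_cosm[OF Mf_add[OF mm(3,4)] a] ..
  also have "actR (\<lambda>\<beta>. m \<beta> + m' \<beta>) a = (\<lambda>\<beta>. actR m a \<beta> + actR m' a \<beta>)"
    using actR_add1[OF Mf_fin[OF mm(3)] Mf_fin[OF mm(4)]] by (simp add: fun_eq_iff)
  also have "cosm \<dots> = add3 (act3 X a) (act3 Y a)"
    unfolding mm(1,2) act3_cosm[OF mm(3) a] act3_cosm[OF mm(4) a] add3_cosm[OF Mf_actR[OF mm(3) a] Mf_actR[OF mm(4) a]] ..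
  finally show "act3 (add3 X Y) a = add3 (act3 X a) (act3 Y a)" .
next
  fix a b :: "'g \<Rightarrow> 'r" and X :: "('g \<Rightarrow> 'r) set" assume a: "a \<in> steinberg_carrier T" and b: "b \<in> steinberg_carrier T"
    and "X \<in> cosm ` Mf"
  then obtain m where mm: "X = cosm m" "m \<in> Mf" by auto
  show "act3 X (convolution T G2 gmul a b) = act3 (act3 X a) b"
    unfolding mm(1) act3_cosm[OF mm(2) a] act3_cosm[OF Mf_actR[OF mm(2) a] b] act3_cosm_conv[OF mm(2) a b]
    using ext[of "actR m (convolution T G2 gmul a b)" "actR (actR m a) b", OF actR_assoc[OF Mf_fin[OF mm(2)] Mf_G[OF mm(2)] a b, symmetric]]
    by simp
qed

end


context stp begin

lemma urmod_M3: "unital_right_module AA (M3 :: (('g \<Rightarrow> 'r::field) set, 'g \<Rightarrow> 'r) rmodule)"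
  unfolding unital_right_module_def
proof (intro conjI ballI rmod_M3)
  fix X :: "('g \<Rightarrow> 'r) set" assume "X \<in> gcarr M3"
  then obtain m where mm: "X = cosm m" "m \<in> Mf" by (auto simp: M3_simps)
  obtain W where W: "ind W (1::'r) \<in> steinberg_carrier T" "actR m (ind W (1::'r)) = m" using Mf_unit[OF mm(2)] by blast
  have "add3 (act3 X (ind W 1)) (cosm (\<lambda>_. 0)) = X"
    unfolding mm(1) act3_cosm[OF mm(2) W(1)] W(2) add3_cosm[OF mm(2) Mf_zero] by simp
  thus "\<exists>ps. set ps \<subseteq> gcarr M3 \<times> rcarr AA \<and> X = foldr (\<lambda>(m', a). gadd M3 (ract M3 m' a)) ps (gzero M3)"
    using mm W by (intro exI[of _ "[(X, ind W 1)]"]) (auto simp: M3_simps AA_simps)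
qed

lemma lmod_NN: "left_module AA (NN :: (('g \<Rightarrow> 'r::field) set, 'g \<Rightarrow> 'r) lmodule)"
  unfolding left_module_def AA_simps NN_simps
proof (intro conjI ballI abgroup_NN)
  fix a :: "'g \<Rightarrow> 'r" and X :: "('g \<Rightarrow> 'r) set" assume a: "a \<in> steinberg_carrier T" and X: "X \<in> (\<lambda>m. {m}) ` Nf"
  then obtain n where "X = {n}" "n \<in> Nf" by auto
  thus "{actL a (the_elem X)} \<in> (\<lambda>m. {m}) ` Nf" using Nf_actL a by auto
next
  fix a b :: "'g \<Rightarrow> 'r" and X :: "('g \<Rightarrow> 'r) set" assume a: "a \<in> steinberg_carrier T" and b: "b \<in> steinberg_carrier T"
  have "actL (\<lambda>x. a x + b x) (the_elem X) = (\<lambda>\<beta>. actL a (the_elem X) \<beta> + actL b (the_elem X) \<beta>)"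
    by (rule ext, rule actL_add1[OF a b])
  thus "{actL (\<lambda>x. a x + b x) (the_elem X)} = {\<lambda>\<beta>. the_elem {actL a (the_elem X)} \<beta> + the_elem {actL b (the_elem X)} \<beta>}"
    by simp
next
  fix a :: "'g \<Rightarrow> 'r" and X Y :: "('g \<Rightarrow> 'r) set"
  have "actL a (\<lambda>\<beta>. the_elem X \<beta> + the_elem Y \<beta>) = (\<lambda>\<beta>. actL a (the_elem X) \<beta> + actL a (the_elem Y) \<beta>)"
    by (rule ext, rule actL_add2)
  thus "{actL a (the_elem {\<lambda>\<beta>. the_elem X \<beta> + the_elem Y \<beta>})} =
        {\<lambda>\<beta>. the_elem {actL a (the_elem X)} \<beta> + the_elem {actL a (the_elem Y)} \<beta>}" by simp
next
  fix a b :: "'g \<Rightarrow> 'r" and X :: "('g \<Rightarrow> 'r) set" assume a: "a \<in> steinberg_carrier T" and b: "b \<in> steinberg_carrier T"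
  have "actL (convolution T G2 gmul a b) (the_elem X) = actL a (actL b (the_elem X))"
    by (rule ext, rule actL_assoc[OF a b])
  thus "{actL (convolution T G2 gmul a b) (the_elem X)} = {actL a (the_elem {actL b (the_elem X)})}" by simp
qed

lemma Orb_unit: "v \<in> Orb \<Longrightarrow> unit v" unfolding Orb_def using unit_rr by auto

lemma Nf_unit: assumes n: "n \<in> Nf"
  shows "\<exists>W. ind W (1::'r::field) \<in> steinberg_carrier T \<and> actL (ind W (1::'r)) n = n"
proof -
  have "finite (supp n)" "\<forall>v\<in>supp n. unit v" using n Orb_unit unfolding Nf_def by auto
  then obtain W where W: "compactin T W" "openin T W" "supp n \<subseteq> W" "\<forall>y\<in>W. unit y"
    using units_co by meson
  have "actL (ind W 1) n = n"
  proof
    fix v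
    have "actL (ind W 1) n v = (if v \<in> W then 1 * n v else 0)" by (rule actL_ind_units[OF W(4)])
    thus "actL (ind W 1) n v = n v" using W(3) by (auto simp: supp_def)
  qed
  thus ?thesis using ind_carrier[OF W(1,2)] by blast
qed

lemma ulmod_NN: "unital_left_module AA (NN :: (('g \<Rightarrow> 'r::field) set, 'g \<Rightarrow> 'r) lmodule)"
  unfolding unital_left_module_def
proof (intro conjI ballI lmod_NN)
  fix X :: "('g \<Rightarrow> 'r) set" assume "X \<in> gcarr NN"
  then obtain n where mm: "X = {n}" "n \<in> Nf" by (auto simp: NN_simps)
  obtain W where W: "ind W (1::'r) \<in> steinberg_carrier T" "actL (ind W (1::'r)) n = n" using Nf_unit[OF mm(2)] by blast
  show "\<exists>ps. set ps \<subseteq> rcarr AA \<times> gcarr NN \<and> X = foldr (\<lambda>(a, m). gadd NN (lact NN a m)) ps (gzero NN)"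
    using mm W by (intro exI[of _ "[(ind W 1, X)]"]) (auto simp: NN_simps AA_simps)
qed

end


context stp begin

lemma Orb_G: "Orb \<subseteq> G" using Orb_unit unit_def by auto

lemma isolate:
  assumes n: "n \<in> Nf" and w: "n w \<noteq> 0"
  shows "\<exists>B. ind B (1::'r::field) \<in> steinberg_carrier T \<and> actL (ind B 1) n = (\<lambda>v. if v = w then n w else 0)"
proof -
  have fin: "finite (supp n)" and so: "supp n \<subseteq> Orb" using n unfolding Nf_def by auto
  have wO: "w \<in> Orb" using w so unfolding supp_def by auto
  let ?F = "supp n - {w}"
  have "closedin T ?F" using Hausdorff_imp_t1_space[OF haus] fin so Orb_G
    unfolding t1_space_closedin_finite by auto
  hence O: "openin T (G - ?F)" by auto
  have "w \<in> G - ?F" using wO Orb_G by auto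
  then obtain B where B: "compactin T B" "openin T B" "w \<in> B" "B \<subseteq> G - ?F" "\<forall>y\<in>B. unit y"
    using unit_co[OF Orb_unit[OF wO] O] by blast
  have "actL (ind B 1) n = (\<lambda>v. if v = w then n w else 0)"
  proof
    fix v
    have "actL (ind B 1) n v = (if v \<in> B then 1 * n v else 0)" by (rule actL_ind_units[OF B(5)])
    thus "actL (ind B 1) n v = (if v = w then n w else 0)" using B(3,4) by (auto simp: supp_def)
  qed
  thus ?thesis using ind_carrier[OF B(1,2)] by blast
qed

lemma transport:
  assumes wO: "w \<in> Orb" and vO: "v \<in> Orb" and nw: "(nw::'r::field) \<noteq> 0"
  shows "\<exists>a. a \<in> steinberg_carrier T \<and>
     actL a (\<lambda>v'. if v' = w then nw else 0) = (\<lambda>v'. if v' = v then k else 0)"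
proof -
  obtain gv where gv: "gv \<in> G" "dd gv = u" "rr gv = v" using vO unfolding Orb_def by auto
  obtain gw where gw: "gw \<in> G" "dd gw = u" "rr gw = w" using wO unfolding Orb_def by auto
  have c: "(gv, ginv gw) \<in> G2" using comp_iff gv gw inv_G r_inv by auto
  let ?g = "gmul gv (ginv gw)"
  have g: "?g \<in> G" "dd ?g = w" "rr ?g = v" using mul_G[OF c] d_mul[OF c] r_mul[OF c] d_inv gw gv by auto
  obtain B where B: "open_bisection T gmul ginv B" "compactin T B" "?g \<in> B"
    using bisec_nbhd[of ?g G] g by auto
  have Bc: "ind B (k / nw) \<in> steinberg_carrier T" using ind_carrier[OF B(2) bisec_open[OF B(1)]] .
  have BG: "B \<subseteq> G" using openin_subset[OF bisec_open[OF B(1)]] .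
  have "actL (ind B (k / nw)) (\<lambda>v'. if v' = w then nw else 0) = (\<lambda>v'. if v' = v then k else 0)"
  proof
    fix v'
    show "actL (ind B (k / nw)) (\<lambda>v'. if v' = w then nw else 0) v' = (if v' = v then k else 0)"
      using actL_ind_bisec[where v=v', OF bisec_inj(1)[OF B(1)] BG B(3) g(2) Bc] g(3) nw by simp
  qed
  thus ?thesis using Bc by blast
qed

lemma simple_NN: "simple_left_module AA (NN :: (('g \<Rightarrow> 'r::field) set, 'g \<Rightarrow> 'r) lmodule)"
  unfolding simple_left_module_def
proof (intro conjI allI impI lmod_NN)
  have "{du} \<in> gcarr (NN :: (('g \<Rightarrow> 'r) set, 'g \<Rightarrow> 'r) lmodule)" using imageI[OF du_Nf, of "\<lambda>n. {n}"] by (simp add: NN_simps)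
  moreover have "du \<noteq> (\<lambda>_. 0::'r)" unfolding du_def by (metis one_neq_zero)
  ultimately show "gcarr (NN :: (('g \<Rightarrow> 'r) set, 'g \<Rightarrow> 'r) lmodule) \<noteq> {gzero NN}" by (auto simp: NN_simps)
next
  fix S :: "('g \<Rightarrow> 'r) set set" assume sub: "left_submodule AA NN S"
  have SN: "S \<subseteq> (\<lambda>n. {n}) ` Nf" and S0: "{\<lambda>_. 0} \<in> S"
    and Sadd: "\<And>X Y. X \<in> S \<Longrightarrow> Y \<in> S \<Longrightarrow> {\<lambda>\<beta>. the_elem X \<beta> + the_elem Y \<beta>} \<in> S"
    and Sact: "\<And>a X. a \<in> steinberg_carrier T \<Longrightarrow> X \<in> S \<Longrightarrow> {actL a (the_elem X)} \<in> S"
  proof -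
    have p: "S \<subseteq> gcarr NN" "gzero NN \<in> S" "\<forall>x\<in>S. \<forall>y\<in>S. gadd NN x y \<in> S"
      "\<forall>a\<in>rcarr AA. \<forall>x\<in>S. lact NN a x \<in> S" using sub unfolding left_submodule_def by blast+
    show "S \<subseteq> (\<lambda>n. {n}) ` Nf" using p(1) by (simp add: NN_simps)
    show "{\<lambda>_. 0} \<in> S" using p(2) by (simp add: NN_simps)
    show "\<And>X Y. X \<in> S \<Longrightarrow> Y \<in> S \<Longrightarrow> {\<lambda>\<beta>. the_elem X \<beta> + the_elem Y \<beta>} \<in> S"
      using p(3) by (simp add: NN_simps)
    show "\<And>a X. a \<in> steinberg_carrier T \<Longrightarrow> X \<in> S \<Longrightarrow> {actL a (the_elem X)} \<in> S"
      using p(4) by (simp add: NN_simps AA_simps)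
  qed
  show "S = {gzero NN} \<or> S = gcarr NN"
  proof (cases "S = {gzero NN}")
    case True thus ?thesis by simp
  next
    case False
    then obtain X where X: "X \<in> S" "X \<noteq> {\<lambda>_. 0}" using S0 by (auto simp: NN_simps)
    then obtain n where n: "X = {n}" "n \<in> Nf" using SN by auto
    obtain w where w: "n w \<noteq> 0" using X(2) n(1) by (metis ext)
    have wO: "w \<in> Orb" using n(2) w unfolding Nf_def supp_def by auto
    obtain B where B: "ind B (1::'r) \<in> steinberg_carrier T" "actL (ind B 1) n = (\<lambda>v. if v = w then n w else 0)"
      using isolate[OF n(2) w] by blast
    have dw: "{\<lambda>v. if v = w then n w else 0} \<in> S" using Sact[OF B(1) X(1)] B(2) n(1) by simp
    have dv: "{\<lambda>v'. if v' = v then k else 0} \<in> S" if vO: "v \<in> Orb" for v k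
    proof -
      obtain a where a: "a \<in> steinberg_carrier T"
        "actL a (\<lambda>v'. if v' = w then n w else 0) = (\<lambda>v'. if v' = v then k else 0)"
        using transport[OF wO vO w] by blast
      show ?thesis using Sact[OF a(1) dw] a(2) by simp
    qed
    have fins: "finite F \<Longrightarrow> F \<subseteq> Orb \<Longrightarrow> {\<lambda>v. if v \<in> F then k v else 0} \<in> S" for F and k :: "'g \<Rightarrow> 'r"
    proof (induction F rule: finite_induct)
      case empty thus ?case using S0 by simp
    next
      case (insert v F)
      have IH: "{\<lambda>v. if v \<in> F then k v else 0} \<in> S" using insert.IH insert.prems by simp
      have D: "{\<lambda>v'. if v' = v then k v else 0} \<in> S" using dv insert.prems by simp
      have "{\<lambda>\<beta>. the_elem {\<lambda>v. if v \<in> F then k v else 0} \<beta> + the_elem {\<lambda>v'. if v' = v then k v else 0} \<beta>} \<in> S"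
        by (rule Sadd[OF IH D])
      moreover have "(\<lambda>\<beta>. the_elem {\<lambda>v. if v \<in> F then k v else 0} \<beta> + the_elem {\<lambda>v'. if v' = v then k v else 0} \<beta>)
          = (\<lambda>va. if va \<in> insert v F then k va else 0)" using insert(2) by (auto simp: fun_eq_iff)
      ultimately show ?case by simp
    qed
    have "(\<lambda>n. {n}) ` Nf \<subseteq> S"
    proof
      fix Y :: "('g \<Rightarrow> 'r) set" assume "Y \<in> (\<lambda>n. {n}) ` Nf"
      then obtain n' where n': "Y = {n'}" "n' \<in> Nf" by auto
      have "n' = (\<lambda>v. if v \<in> supp n' then n' v else 0)" by (auto simp: supp_def fun_eq_iff)
      thus "Y \<in> S" using fins[of "supp n'" n'] n' unfolding Nf_def by auto
    qed
    thus ?thesis using SN by (auto simp: NN_simps)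
  qed
qed

end


context stp begin

definition ff :: "('g \<Rightarrow> 'r::field) set \<Rightarrow> ('g \<Rightarrow> 'r) set" where
  "ff X = {\<lambda>\<beta>. the_elem X \<beta> - L (the_elem X) \<beta>}"
definition gg :: "('g \<Rightarrow> 'r::field) set \<Rightarrow> ('g \<Rightarrow> 'r) set" where
  "gg X = cosm (the_elem X)"

lemma Mf_fL: "m \<in> Mf \<Longrightarrow> (\<lambda>\<beta>. m \<beta> - L m \<beta>) \<in> Mf" using Mf_diff L_Mf by auto

lemma hom_ff: "right_hom AA MM MM (ff :: ('g \<Rightarrow> 'r::field) set \<Rightarrow> _)"
  unfolding right_hom_def
proof (intro conjI ballI)
  fix X :: "('g \<Rightarrow> 'r) set" assume "X \<in> gcarr MM"
  then obtain m where m: "X = {m}" "m \<in> Mf" by (auto simp: MM_simps)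
  thus "ff X \<in> gcarr MM" using Mf_fL[OF m(2)] by (simp add: MM_simps ff_def)
next
  fix X Y :: "('g \<Rightarrow> 'r) set" assume "X \<in> gcarr MM" "Y \<in> gcarr MM"
  then obtain m m' where m: "X = {m}" "m \<in> Mf" "Y = {m'}" "m' \<in> Mf" by (auto simp: MM_simps)
  show "ff (gadd MM X Y) = gadd MM (ff X) (ff Y)"
    using m unfolding ff_def MM_simps by (simp add: L_add fun_eq_iff)
next
  fix X :: "('g \<Rightarrow> 'r) set" and a :: "'g \<Rightarrow> 'r" assume "X \<in> gcarr MM" and a: "a \<in> rcarr AA"
  then obtain m where m: "X = {m}" "m \<in> Mf" by (auto simp: MM_simps)
  have a': "a \<in> steinberg_carrier T" using a by (simp add: AA_simps)
  have "actR (\<lambda>\<beta>. m \<beta> - L m \<beta>) a = (\<lambda>\<beta>. actR m a \<beta> - L (actR m a) \<beta>)"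
    using actR_diff1[OF Mf_fin[OF m(2)] Mf_fin[OF L_Mf[OF m(2)]]] L_actR[OF m(2) a'] by (simp add: fun_eq_iff)
  thus "ff (ract MM X a) = ract MM (ff X) a" using m unfolding ff_def MM_simps by simp
qed

lemma hom_gg: "right_hom AA MM M3 (gg :: ('g \<Rightarrow> 'r::field) set \<Rightarrow> _)"
  unfolding right_hom_def
proof (intro conjI ballI)
  fix X :: "('g \<Rightarrow> 'r) set" assume "X \<in> gcarr MM"
  then obtain m where m: "X = {m}" "m \<in> Mf" by (auto simp: MM_simps)
  thus "gg X \<in> gcarr M3" by (simp add: M3_simps gg_def)
next
  fix X Y :: "('g \<Rightarrow> 'r) set" assume "X \<in> gcarr MM" "Y \<in> gcarr MM"
  then obtain m m' where m: "X = {m}" "m \<in> Mf" "Y = {m'}" "m' \<in> Mf" by (auto simp: MM_simps)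
  show "gg (gadd MM X Y) = gadd M3 (gg X) (gg Y)"
    using m add3_cosm[OF m(2) m(4)] unfolding gg_def MM_simps M3_simps by simp
next
  fix X :: "('g \<Rightarrow> 'r) set" and a :: "'g \<Rightarrow> 'r" assume "X \<in> gcarr MM" and a: "a \<in> rcarr AA"
  then obtain m where m: "X = {m}" "m \<in> Mf" by (auto simp: MM_simps)
  have a': "a \<in> steinberg_carrier T" using a by (simp add: AA_simps)
  show "gg (ract MM X a) = ract M3 (gg X) a" using m act3_cosm[OF m(2) a'] unfolding gg_def MM_simps M3_simps by simp
qed

lemma gg_surj: "gg ` gcarr MM = gcarr (M3 :: (('g \<Rightarrow> 'r::field) set, 'g \<Rightarrow> 'r) rmodule)"
  by (auto simp: MM_simps M3_simps gg_def image_image)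

lemma gg_ker: "{X \<in> gcarr MM. gg X = gzero M3} = ff ` gcarr (MM :: (('g \<Rightarrow> 'r::field) set, 'g \<Rightarrow> 'r) rmodule)"
proof (rule set_eqI)
  fix X :: "('g \<Rightarrow> 'r) set"
  show "X \<in> {X \<in> gcarr MM. gg X = gzero M3} \<longleftrightarrow> X \<in> ff ` gcarr MM"
  proof
    assume "X \<in> {X \<in> gcarr MM. gg X = gzero M3}"
    then obtain m where m: "X = {m}" "m \<in> Mf" "cosm m = cosm (\<lambda>_. 0)" by (auto simp: MM_simps M3_simps gg_def)
    hence "(\<lambda>\<beta>. m \<beta> - 0) \<in> II" using cosm_eq[OF m(2) Mf_zero] by simp
    then obtain m0 where m0: "m0 \<in> Mf" "(\<lambda>\<beta>. m \<beta>) = (\<lambda>\<beta>. m0 \<beta> - L m0 \<beta>)" unfolding II_def by auto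
    hence "X = ff {m0}" using m(1) by (simp add: ff_def)
    thus "X \<in> ff ` gcarr MM" using m0(1) by (auto simp: MM_simps)
  next
    assume "X \<in> ff ` gcarr MM"
    then obtain m0 where m0: "m0 \<in> Mf" "X = {\<lambda>\<beta>. m0 \<beta> - L m0 \<beta>}" by (auto simp: MM_simps ff_def)
    have i: "(\<lambda>\<beta>. m0 \<beta> - L m0 \<beta>) \<in> II" using m0(1) unfolding II_def by blast
    have "cosm (\<lambda>\<beta>. m0 \<beta> - L m0 \<beta>) = cosm (\<lambda>_. 0)"
      using cosm_eq[OF Mf_fL[OF m0(1)] Mf_zero] i by simp
    thus "X \<in> {X \<in> gcarr MM. gg X = gzero M3}" using m0 Mf_fL[OF m0(1)] by (auto simp: MM_simps M3_simps gg_def)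
  qed
qed

lemma ff_inj:
  fixes c :: "'g \<Rightarrow> 'c::{group_add,linorder}"
  assumes tog: "totally_ordered_group TYPE('c)" and grd: "grading T G2 gmul c" and cx: "c x \<noteq> 0"
  shows "inj_on ff (gcarr (MM :: (('g \<Rightarrow> 'r::field) set, 'g \<Rightarrow> 'r) rmodule))"
proof (rule inj_onI)
  fix X Y :: "('g \<Rightarrow> 'r) set" assume "X \<in> gcarr MM" "Y \<in> gcarr MM" and e: "ff X = ff Y"
  then obtain m m' where m: "X = {m}" "m \<in> Mf" "Y = {m'}" "m' \<in> Mf" by (auto simp: MM_simps)
  let ?k = "\<lambda>\<beta>. m \<beta> - m' \<beta>"
  have k: "?k \<in> Mf" using Mf_diff m by auto
  have e2: "(\<lambda>\<beta>. m \<beta> - L m \<beta>) = (\<lambda>\<beta>. m' \<beta> - L m' \<beta>)" using e m by (simp add: ff_def)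
  have "\<And>\<beta>. ?k \<beta> = L ?k \<beta>"
  proof -
    fix \<beta> have "m \<beta> - L m \<beta> = m' \<beta> - L m' \<beta>" using e2 by (metis)
    thus "?k \<beta> = L ?k \<beta>" unfolding L_diff by (simp add: algebra_simps)
  qed
  hence "supp ?k = {}" using L_inj[OF tog grd cx k] by blast
  hence "m = m'" by (auto simp: supp_def fun_eq_iff)
  thus "X = Y" using m by simp
qed

end


context stp begin

definition Phi' :: "('g \<Rightarrow> 'r::field) set \<times> ('g \<Rightarrow> 'r) set \<Rightarrow> 'r" where
  "Phi' p = Phi (the_elem (fst p)) (the_elem (snd p))"

definition Psi :: "(('g \<Rightarrow> 'r::field) set \<times> ('g \<Rightarrow> 'r) set \<Rightarrow> int) \<Rightarrow> 'r" where
  "Psi w = (\<Sum>p\<in>{p. w p \<noteq> 0}. of_int (w p) * Phi' p)"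

lemma Psi_sup: "finite F \<Longrightarrow> {p. w p \<noteq> 0} \<subseteq> F \<Longrightarrow> Psi w = (\<Sum>p\<in>F. of_int (w p) * Phi' p)"
  unfolding Psi_def by (rule sum.mono_neutral_left) auto

lemma sum_delta_Phi: "finite F \<Longrightarrow> q \<in> F \<Longrightarrow> (\<Sum>p\<in>F. of_int (delta q p) * Phi' p) = (Phi' q :: 'r::field)"
proof -
  assume f: "finite F" and q: "q \<in> F"
  have "(\<Sum>p\<in>F. of_int (delta q p) * Phi' p) = (\<Sum>p\<in>F. if p = q then (Phi' p :: 'r) else 0)"
    by (rule sum.cong) (simp_all add: delta_def)
  also have "\<dots> = Phi' q" using sum.delta[OF f, of q "Phi'"] q by simp
  finally show ?thesis .
qed

lemma Psi_delta3:
  "Psi (\<lambda>x. delta p1 x - delta p2 x - delta p3 x) = Phi' p1 - Phi' p2 - (Phi' p3 :: 'r::field)"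
proof -
  let ?F = "{p1, p2, p3}"
  have "Psi (\<lambda>x. delta p1 x - delta p2 x - delta p3 x) =
     (\<Sum>p\<in>?F. of_int (delta p1 p - delta p2 p - delta p3 p) * (Phi' p :: 'r))"
    by (rule Psi_sup) (auto simp: delta_def)
  also have "\<dots> = (\<Sum>p\<in>?F. of_int (delta p1 p) * Phi' p) - (\<Sum>p\<in>?F. of_int (delta p2 p) * Phi' p)
       - (\<Sum>p\<in>?F. of_int (delta p3 p) * Phi' p)"
    by (simp add: sum_subtractf left_diff_distrib)
  also have "\<dots> = Phi' p1 - Phi' p2 - Phi' p3" by (simp add: sum_delta_Phi)
  finally show ?thesis .
qed

lemma Psi_delta2:
  "Psi (\<lambda>x. delta p1 x - delta p2 x) = Phi' p1 - (Phi' p2 :: 'r::field)"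
proof -
  let ?F = "{p1, p2}"
  have "Psi (\<lambda>x. delta p1 x - delta p2 x) =
     (\<Sum>p\<in>?F. of_int (delta p1 p - delta p2 p) * (Phi' p :: 'r))"
    by (rule Psi_sup) (auto simp: delta_def)
  also have "\<dots> = (\<Sum>p\<in>?F. of_int (delta p1 p) * Phi' p) - (\<Sum>p\<in>?F. of_int (delta p2 p) * Phi' p)"
    by (simp add: sum_subtractf left_diff_distrib)
  also have "\<dots> = Phi' p1 - Phi' p2" by (simp add: sum_delta_Phi)
  finally show ?thesis .
qed

lemma Psi_delta1: "Psi (delta p) = (Phi' p :: 'r::field)"
proof -
  have "Psi (delta p) = (\<Sum>q\<in>{p}. of_int (delta p q) * (Phi' q :: 'r))"
    by (rule Psi_sup) (auto simp: delta_def)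
  thus ?thesis by (simp add: delta_def)
qed

lemma Psi_diff: assumes "finite {p. a p \<noteq> 0}" "finite {p. b p \<noteq> 0}"
  shows "Psi (\<lambda>x. a x - b x) = Psi a - (Psi b :: 'r::field)"
proof -
  let ?F = "{p. a p \<noteq> 0} \<union> {p. b p \<noteq> 0}"
  have f: "finite ?F" using assms by auto
  have "Psi (\<lambda>x. a x - b x) = (\<Sum>p\<in>?F. of_int (a p - b p) * (Phi' p :: 'r))" by (rule Psi_sup[OF f]) auto
  moreover have "Psi a = (\<Sum>p\<in>?F. of_int (a p) * (Phi' p :: 'r))" by (rule Psi_sup[OF f]) auto
  moreover have "Psi b = (\<Sum>p\<in>?F. of_int (b p) * (Phi' p :: 'r))" by (rule Psi_sup[OF f]) auto
  ultimately show ?thesis by (simp add: sum_subtractf left_diff_distrib)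
qed

lemma gens_Psi: assumes s: "s \<in> tensor_gens AA MM (NN :: (('g \<Rightarrow> 'r::field) set, 'g \<Rightarrow> 'r) lmodule)"
  shows "finite {p. s p \<noteq> 0} \<and> Psi s = (0::'r)"
proof -
  have fin3: "finite {p. (\<lambda>x. delta p1 x - delta p2 x - delta p3 x) p \<noteq> 0}" for p1 p2 p3 :: "('g \<Rightarrow> 'r) set \<times> ('g \<Rightarrow> 'r) set"
    by (rule finite_subset[of _ "{p1,p2,p3}"]) (auto simp: delta_def)
  have fin2: "finite {p. (\<lambda>x. delta p1 x - delta p2 x) p \<noteq> 0}" for p1 p2 :: "('g \<Rightarrow> 'r) set \<times> ('g \<Rightarrow> 'r) set"
    by (rule finite_subset[of _ "{p1,p2}"]) (auto simp: delta_def)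
  from s consider
    (a) m m' n where "s = (\<lambda>x. delta (gadd MM m m', n) x - delta (m, n) x - delta (m', n) x)"
       "m \<in> gcarr MM" "m' \<in> gcarr MM" "n \<in> gcarr NN"
  | (b) m n n' where "s = (\<lambda>x. delta (m, gadd NN n n') x - delta (m, n) x - delta (m, n') x)"
       "m \<in> gcarr MM" "n \<in> gcarr NN" "n' \<in> gcarr NN"
  | (c) m a n where "s = (\<lambda>x. delta (ract MM m a, n) x - delta (m, lact NN a n) x)"
       "m \<in> gcarr MM" "a \<in> rcarr AA" "n \<in> gcarr NN"
    unfolding tensor_gens_def by blast
  thus ?thesis
  proof cases
    case a
    then obtain m1 m2 n1 where e: "m = {m1}" "m' = {m2}" "n = {n1}" "m1 \<in> Mf" "m2 \<in> Mf"
      by (auto simp: MM_simps NN_simps)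
    have "Psi s = Phi (\<lambda>\<beta>. m1 \<beta> + m2 \<beta>) n1 - Phi m1 n1 - Phi m2 n1"
      unfolding a(1) Psi_delta3 by (simp add: Phi'_def e MM_simps)
    thus ?thesis using Phi_add1[OF Mf_fin[OF e(4)] Mf_fin[OF e(5)]] fin3 a(1) by simp
  next
    case b
    then obtain m1 n1 n2 where e: "m = {m1}" "n = {n1}" "n' = {n2}"
      by (auto simp: MM_simps NN_simps)
    have "Psi s = Phi m1 (\<lambda>\<beta>. n1 \<beta> + n2 \<beta>) - Phi m1 n1 - Phi m1 n2"
      unfolding b(1) Psi_delta3 by (simp add: Phi'_def e NN_simps)
    thus ?thesis using Phi_add2[of m1 n1 n2] fin3 b(1) by simp
  next
    case c
    then obtain m1 n1 where e: "m = {m1}" "n = {n1}" "m1 \<in> Mf"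
      by (auto simp: MM_simps NN_simps)
    have a: "a \<in> steinberg_carrier T" using c by (simp add: AA_simps)
    have "Psi s = Phi (actR m1 a) n1 - Phi m1 (actL a n1)"
      unfolding c(1) Psi_delta2 by (simp add: Phi'_def e NN_simps MM_simps)
    thus ?thesis using Phi_bal[OF Mf_fin[OF e(3)] Mf_G[OF e(3)] a] fin2 c(1) by simp
  qed
qed

lemma span_Psi: assumes "w \<in> int_span (tensor_gens AA MM (NN :: (('g \<Rightarrow> 'r::field) set, 'g \<Rightarrow> 'r) lmodule))"
  shows "finite {p. w p \<noteq> 0} \<and> Psi w = (0::'r)"
  using assms
proof (induction rule: int_span.induct)
  case zero
  show ?case by (simp add: Psi_def)
next
  case (gen s) thus ?case using gens_Psi by blast
next
  case (diff a b)
  have "finite {p. a p - b p \<noteq> 0}"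
    by (rule finite_subset[of _ "{p. a p \<noteq> 0} \<union> {p. b p \<noteq> 0}"]) (use diff in auto)
  thus ?case using Psi_diff[of a b] diff by simp
qed

end


lemma push_delta: "push F (delta p) = delta (F p)"
proof
  fix y
  have "{x. delta p x \<noteq> 0 \<and> F x = y} = (if F p = y then {p} else {})" by (auto simp: delta_def)
  thus "push F (delta p) y = delta (F p) y" unfolding push_def by (auto simp: delta_def)
qed

lemma gen2_mem: "m \<in> gcarr M \<Longrightarrow> n \<in> gcarr N \<Longrightarrow> n' \<in> gcarr N \<Longrightarrow>
  (\<lambda>x. delta (m, gadd N n n') x - delta (m, n) x - delta (m, n') x) \<in> tensor_gens A M N"
  unfolding tensor_gens_def by blast

lemma gen3_mem: "m \<in> gcarr M \<Longrightarrow> a \<in> rcarr A \<Longrightarrow> n \<in> gcarr N \<Longrightarrow>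
  (\<lambda>x. delta (ract M m a, n) x - delta (m, lact N a n) x) \<in> tensor_gens A M N"
  unfolding tensor_gens_def by blast

context stp begin

lemma contra:
  fixes c :: "'g \<Rightarrow> 'c::{group_add,linorder}"
  assumes tog: "totally_ordered_group TYPE('c)" and grd: "grading T G2 gmul c" and cx: "c x \<noteq> 0"
    and SF: "left_SF_ring (AA :: ('g \<Rightarrow> 'r::field) rng) TYPE(('g \<Rightarrow> 'r) set) TYPE(('g \<Rightarrow> 'r) set)"
  shows False
proof -
  have flat: "flat_left_module AA (NN :: (('g \<Rightarrow> 'r) set, 'g \<Rightarrow> 'r) lmodule) TYPE(('g \<Rightarrow> 'r) set)"
    using SF simple_NN ulmod_NN unfolding left_SF_ring_def by blast
  have C1: "\<forall>z\<in>free_on (gcarr MM \<times> gcarr NN).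
     tens_map ff z \<in> tensor_rels AA MM NN \<longrightarrow> z \<in> tensor_rels AA (MM :: (('g \<Rightarrow> 'r) set, 'g \<Rightarrow> 'r) rmodule) (NN :: (('g \<Rightarrow> 'r) set, 'g \<Rightarrow> 'r) lmodule)"
    using flat urmod_MM urmod_M3 hom_ff hom_gg ff_inj[OF tog grd cx] gg_surj gg_ker
    unfolding flat_left_module_def by blast
  let ?p = "({du}, {du}) :: ('g \<Rightarrow> 'r) set \<times> ('g \<Rightarrow> 'r) set"
  have duM: "{du} \<in> gcarr (MM :: (('g \<Rightarrow> 'r) set, 'g \<Rightarrow> 'r) rmodule)" using imageI[OF du_Mf, of "\<lambda>n. {n}"] by (simp add: MM_simps)
  have duN: "{du} \<in> gcarr (NN :: (('g \<Rightarrow> 'r) set, 'g \<Rightarrow> 'r) lmodule)" using imageI[OF du_Nf, of "\<lambda>n. {n}"] by (simp add: NN_simps)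
  have zN: "{\<lambda>_. 0} \<in> gcarr (NN :: (('g \<Rightarrow> 'r) set, 'g \<Rightarrow> 'r) lmodule)" using imageI[OF Nf_zero, of "\<lambda>n. {n}"] by (simp add: NN_simps)
  have zfree: "delta ?p \<in> free_on (gcarr MM \<times> gcarr NN)"
    unfolding free_on_def using duM duN by (auto simp: delta_def)
  obtain V where V: "compactin T V" "openin T V" "u \<in> V" "\<forall>y\<in>V. unit y"
    using unit_co[OF u, of G] uG by auto
  obtain B where B: "open_bisection T gmul ginv B" "compactin T B" "x \<in> B"
    using bisec_nbhd[of x G] x by auto
  have Bo: "openin T B" using bisec_open[OF B(1)] .
  have BG: "B \<subseteq> G" using openin_subset[OF Bo] .
  let ?a = "\<lambda>\<gamma>. ind V (1::'r) \<gamma> + ind B (-1) \<gamma>"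
  have aC: "?a \<in> steinberg_carrier T" by (rule ind2_carrier[OF V(1,2) B(2) Bo])
  have VC: "ind V (1::'r) \<in> steinberg_carrier T" by (rule ind_carrier[OF V(1,2)])
  have BC: "ind B (-1::'r) \<in> steinberg_carrier T" by (rule ind_carrier[OF B(2) Bo])
  have ractu: "actR du ?a = (\<lambda>\<beta>. du \<beta> - dx \<beta>)"
  proof
    fix \<beta>
    show "actR du ?a \<beta> = du \<beta> - dx \<beta>"
    proof (cases "\<beta> \<in> G \<and> rr \<beta> = u")
      case True
      have 1: "ind V (1::'r) \<beta> = du \<beta>"
      proof (cases "\<beta> \<in> V")
        case True2: True
        hence "\<beta> = u" using V(4) unit_r True by metis
        thus ?thesis using True2 by (simp add: ind_def du_def)
      next
        case False thus ?thesis using V(3) by (auto simp: ind_def du_def)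
      qed
      have 2: "ind B (-1::'r) \<beta> = - dx \<beta>"
      proof (cases "\<beta> \<in> B")
        case True2: True
        have "rr \<beta> = rr x" using True x by simp
        hence "\<beta> = x" using bisec_inj(2)[OF B(1)] True2 B(3) unfolding inj_on_def by blast
        thus ?thesis using True2 by (simp add: ind_def dx_def)
      next
        case False thus ?thesis using B(3) by (auto simp: ind_def dx_def)
      qed
      show ?thesis using actR_du[of ?a \<beta>] True 1 2 by simp
    next
      case False
      have "du \<beta> = (0::'r)" using False uG unit_r[OF u] by (auto simp: du_def)
      moreover have "dx \<beta> = (0::'r)" using False x by (auto simp: dx_def)
      ultimately show ?thesis using actR_du[of ?a \<beta>] False by simp
    qed
  qed
  have lactu: "actL ?a du = (\<lambda>_. 0)"
  proof
    fix v
    have "actL ?a du v = actL (ind V 1) du v + actL (ind B (-1)) du v" by (rule actL_add1[OF VC BC])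
    also have "actL (ind V (1::'r)) du v = du v"
      using actL_ind_units[OF V(4), of 1 du v] V(3) by (auto simp: du_def)
    also have "actL (ind B (-1::'r)) du v = - du v"
      using actL_ind_bisec[where v=v and k=1, OF bisec_inj(1)[OF B(1)] BG B(3) x(2) BC] x(3)
      unfolding du_def by simp
    finally show "actL ?a du v = 0" by simp
  qed
  have ffdu: "ff {du::'g \<Rightarrow> 'r} = {\<lambda>\<beta>. du \<beta> - dx \<beta>}" by (simp add: ff_def L_du)
  let ?g3 = "\<lambda>y. delta (ract MM {du} ?a, {du}) y - delta ({du}, lact NN ?a {du}) y"
  have aA: "?a \<in> rcarr AA" using aC by (simp add: AA_simps)
  have g3: "?g3 \<in> tensor_gens AA MM NN" by (rule gen3_mem[OF duM aA duN])
  let ?z0 = "{\<lambda>_. 0} :: ('g \<Rightarrow> 'r) set"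
  let ?g2 = "\<lambda>y. delta ({du}, gadd NN ?z0 ?z0) y - delta ({du}, ?z0) y - delta ({du}, ?z0) y"
  have g2: "?g2 \<in> tensor_gens AA MM NN" by (rule gen2_mem[OF duM zN zN])
  have "(\<lambda>y. ?g3 y - ?g2 y) \<in> tensor_rels AA MM NN"
    unfolding tensor_rels_def by (rule int_span.diff[OF int_span.gen[OF g3] int_span.gen[OF g2]])
  moreover have "(\<lambda>y. ?g3 y - ?g2 y) = delta (ff {du::'g \<Rightarrow> 'r}, {du})"
  proof -
    have e1: "ract MM {du} ?a = ff {du}" using ractu ffdu by (simp add: MM_simps)
    have e2: "lact NN ?a {du} = ?z0" using lactu by (simp add: NN_simps)
    have e3: "gadd NN ?z0 ?z0 = ?z0" by (simp add: NN_simps)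
    show ?thesis unfolding e1 e2 e3 by (simp add: fun_eq_iff)
  qed
  ultimately have "delta (ff {du::'g \<Rightarrow> 'r}, {du}) \<in> tensor_rels AA MM NN" by simp
  moreover have "tens_map ff (delta ?p) = delta (ff {du::'g \<Rightarrow> 'r}, {du})"
    unfolding tens_map_def push_delta by simp
  ultimately have "delta ?p \<in> tensor_rels AA MM NN" using C1 zfree by simp
  hence "Psi (delta ?p) = (0::'r)" using span_Psi unfolding tensor_rels_def by blast
  moreover have "Psi (delta ?p) = (1::'r)"
  proof -
    have "Phi (du::'g \<Rightarrow> 'r) du = (\<Sum>\<alpha>\<in>{u}. du \<alpha> * du (dd \<alpha>))" unfolding Phi_def supp_du ..
    also have "\<dots> = 1" using u unfolding unit_def by (simp add: du_def)
    finally show ?thesis unfolding Psi_delta1 Phi'_def by simp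
  qed
  ultimately show False by simp
qed

end

theorem proposition3p3:
  fixes T :: "'g topology"
    and G2 :: "('g \<times> 'g) set"
    and gmul :: "'g \<Rightarrow> 'g \<Rightarrow> 'g"
    and ginv :: "'g \<Rightarrow> 'g"
    and c :: "'g \<Rightarrow> 'c::{group_add,linorder}"
  assumes "totally_ordered_group TYPE('c)"
    and "ample_groupoid T G2 gmul ginv"
    and "Hausdorff_space T"
    and "grading T G2 gmul c"
    and "left_SF_ring (steinberg_algebra T G2 gmul :: ('g \<Rightarrow> 'r::field) rng)
           TYPE(('g \<Rightarrow> 'r) set) TYPE(('g \<Rightarrow> 'r) set)"
  shows "\<forall>u\<in>unit_space T gmul ginv. \<forall>x\<in>isotropy T gmul ginv u. c x = 0"
proof (intro ballI)
  fix u x assume uU: "u \<in> unit_space T gmul ginv" and xI: "x \<in> isotropy T gmul ginv u"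
  show "c x = 0"
  proof (rule ccontr)
    assume cx: "c x \<noteq> 0"
    have gp: "groupoid T G2 gmul ginv" using assms(2)
      unfolding ample_groupoid_def etale_groupoid_def topological_groupoid_def by blast
    interpret gpd T G2 gmul ginv by unfold_locales (rule gp)
    have un: "unit u" using uU unit_space_iff by simp
    have xx: "x \<in> topspace T" "gdom gmul ginv x = u" "gran gmul ginv x = u" using xI unfolding isotropy_def by auto
    interpret stp T G2 gmul ginv u x
      by unfold_locales (rule assms(2), rule assms(3), rule un, rule xx(1), rule xx(2), rule xx(3))
    show False using contra[OF assms(1) assms(4) cx assms(5)] .
  qed
qed

end
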